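(* Let $\alpha=(\alpha_n)_{n\in\mathbb{N}}\in\ell^2$ and let $f_\alpha(z)=\sum_{n\ge0}\alpha_n z^n$. The following statements are equivalent: (i) the Rhaly operator $R_\alpha$, $(R_\alpha f)(k)=\alpha_k\sum_{j=0}^k f(j)$, is bounded on $\ell^2$; (ii) $f_\alpha$ belongs to $\Lambda^2_{1/2}$; (iii) $\displaystyle\sup_{n\in\mathbb{N}} 2^n\sum_{j=2^n}^{2^{n+1}-1}|\alpha_j|^2<\infty$.
   Context: $\mathbb{N}=\{0,1,2,\dots\}$; $\ell^2$ is the Hilbert space of square-summable functions $f:\mathbb{N}\to\mathbb{C}$. For $\alpha\in\ell^2$, $f_\alpha\in H^2$ (the Hardy space of the unit disc) and is identified with its boundary function on the unit circle $\mathbb{T}$. The mean Lipschitz space is $\Lambda^2_{1/2}=\{f\in L^2(\mathbb{T}): \sup_{t\in[-\pi,\pi]}|t|^{-1/2}\|f_t-f\|_{L^2}<\infty\}$, where $f_t(e^{i\theta})=f(e^{i(\theta-t)})$. *)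

theory Defs
  imports "HOL-Analysis.Analysis"
begin

definition ell2 :: "(nat \<Rightarrow> complex) \<Rightarrow> bool" where
  "ell2 f \<longleftrightarrow> summable (\<lambda>n. (cmod (f n))^2)"

definition ell2_norm_sq :: "(nat \<Rightarrow> complex) \<Rightarrow> real" where
  "ell2_norm_sq f = (\<Sum>n. (cmod (f n))^2)"

definition rhaly :: "(nat \<Rightarrow> complex) \<Rightarrow> (nat \<Rightarrow> complex) \<Rightarrow> nat \<Rightarrow> complex" where
  "rhaly \<alpha> f k = \<alpha> k * (\<Sum>j\<le>k. f j)"

definition rhaly_bounded :: "(nat \<Rightarrow> complex) \<Rightarrow> bool" where
  "rhaly_bounded \<alpha> \<longleftrightarrow> (\<exists>C. \<forall>f. ell2 f \<longrightarrow>
      ell2 (rhaly \<alpha> f) \<and> ell2_norm_sq (rhaly \<alpha> f) \<le> C * ell2_norm_sq f)"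

text \<open>Functions on the unit circle T are represented as 2pi-periodic functions
  g on the reals (g(theta) standing for the value at e^{i theta}).\<close>
definition L2_circle :: "(real \<Rightarrow> complex) \<Rightarrow> bool" where
  "L2_circle g \<longleftrightarrow> g \<in> borel_measurable borel \<and> (\<forall>\<theta>. g (\<theta> + 2 * pi) = g \<theta>) \<and>
     set_integrable lborel {-pi..pi} (\<lambda>\<theta>. (cmod (g \<theta>))^2)"

definition L2_dist_circle :: "(real \<Rightarrow> complex) \<Rightarrow> (real \<Rightarrow> complex) \<Rightarrow> real" where
  "L2_dist_circle g h =
     sqrt ((1 / (2 * pi)) * (LINT \<theta>:{-pi..pi}|lborel. (cmod (g \<theta> - h \<theta>))^2))"

text \<open>g is (a representative of) the boundary function of f_alpha in H^2:
  the Taylor partial sums sum_{n<N} alpha_n e^{in theta} converge to g in L^2(T).\<close>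
definition boundary_function :: "(nat \<Rightarrow> complex) \<Rightarrow> (real \<Rightarrow> complex) \<Rightarrow> bool" where
  "boundary_function \<alpha> g \<longleftrightarrow> L2_circle g \<and>
     (\<lambda>N. L2_dist_circle (\<lambda>\<theta>. \<Sum>n<N. \<alpha> n * exp (\<i> * of_nat n * of_real \<theta>)) g)
       \<longlonglongrightarrow> 0"

definition mean_lipschitz_half :: "(real \<Rightarrow> complex) \<Rightarrow> bool" where
  "mean_lipschitz_half g \<longleftrightarrow> L2_circle g \<and>
     (\<exists>C. \<forall>t\<in>{-pi..pi}. L2_dist_circle (\<lambda>\<theta>. g (\<theta> - t)) g \<le> C * sqrt \<bar>t\<bar>)"

end

theory Submission
  imports Defs
begin

lemma dyadic_split:
  fixes h :: "nat \<Rightarrow> 'a::comm_monoid_add"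
  shows "(\<Sum>k<2^M. h k) = h 0 + (\<Sum>m<M. \<Sum>k\<in>{2^m..<2^(m+1)}. h k)"
proof (induction M)
  case 0
  then show ?case by simp
next
  case (Suc M)
  have "(\<Sum>k<2^Suc M. h k) = (\<Sum>k\<in>{0..<2^M}. h k) + (\<Sum>k\<in>{2^M..<2^Suc M}. h k)"
    by (subst sum.atLeastLessThan_concat) (auto simp: atLeast0LessThan)
  also have "\<dots> = h 0 + (\<Sum>m<M. \<Sum>k\<in>{2^m..<2^(m+1)}. h k) + (\<Sum>k\<in>{2^M..<2^Suc M}. h k)"
    using Suc by (simp add: atLeast0LessThan)
  finally show ?case by (simp add: add.assoc)
qed

lemma dyadic_split1:
  fixes h :: "nat \<Rightarrow> 'a::cancel_comm_monoid_add"
  shows "(\<Sum>k\<in>{1..<2^M}. h k) = (\<Sum>m<M. \<Sum>k\<in>{2^m..<2^(m+1)}. h k)"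
proof -
  have "(\<Sum>k<2^M. h k) = h 0 + (\<Sum>k\<in>{1..<2^M}. h k)"
    by (metis atLeast0LessThan one_le_numeral one_le_power sum.atLeastLessThan_concat
        sum.atLeast_Suc_lessThan zero_less_one_class.zero_le_one le_numeral_extra(4) One_nat_def
        Suc_le_lessD le_add_same_cancel1 sum.atLeastLessThan_concat)
  then show ?thesis using dyadic_split[of h M] by simp
qed

lemma geom_tail_bound:
  fixes q :: real
  assumes "0 \<le> q" "q < 1"
  shows "(\<Sum>m\<in>{i..<M}. q^m) \<le> q^i / (1 - q)"
proof (cases "i < M")
  case True
  have "(1 - q) * (\<Sum>m\<in>{i..M-1}. q^m) = q^i - q^Suc (M-1)"
    using True by (intro sum_gp_multiplied) simp
  moreover have "{i..<M} = {i..M-1}" using True by auto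
  ultimately have "(1 - q) * (\<Sum>m\<in>{i..<M}. q^m) \<le> q^i"
    using assms by simp
  then show ?thesis using assms by (simp add: field_simps)
next
  case False
  then show ?thesis using assms by simp
qed

lemma block_CS:
  fixes x :: "nat \<Rightarrow> real"
  shows "(\<Sum>j\<in>{2^i..<2^(i+1)}. x j)^2 \<le> 2^i * (\<Sum>j\<in>{2^i..<2^(i+1)}. (x j)^2)"
proof -
  have "(\<Sum>j\<in>{2^i..<2^(i+1)::nat}. 1 * x j)^2 \<le> (\<Sum>j\<in>{2^i..<2^(i+1)::nat}. 1^2) * (\<Sum>j\<in>{2^i..<2^(i+1)}. (x j)^2)"
    by (rule Cauchy_Schwarz_ineq_sum)
  moreover have "card {2^i..<2^(i+1)::nat} = 2^i" by simp
  ultimately show ?thesis by simp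
qed

lemma hardy_dyadic:
  fixes a x :: "nat \<Rightarrow> real"
  assumes a0: "\<And>k. 0 \<le> a k" and x0: "\<And>k. 0 \<le> x k"
    and B: "\<And>m. 2^m * (\<Sum>k\<in>{2^m..<2^(m+1)}. a k) \<le> B"
  shows "(\<Sum>k<2^M. a k * (\<Sum>j\<le>k. x j)^2) \<le> (a 0 + 4*B + 2*B*(25/9)*(32/7)) * (\<Sum>j<2^M. (x j)^2)"
proof -
  define S where "S i = (\<Sum>j\<in>{2^i..<2^(i+1)}. x j)" for i
  define E where "E i = (\<Sum>j\<in>{2^i..<2^(i+1)}. (x j)^2)" for i
  define b where "b m = (\<Sum>k\<in>{2^m..<2^(m+1)}. a k)" for m
  define q :: real where "q = 25/32"
  have S0: "0 \<le> S i" for i unfolding S_def by (intro sum_nonneg x0)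
  have E0: "0 \<le> E i" for i unfolding E_def by (intro sum_nonneg) simp
  have b0: "0 \<le> b m" for m unfolding b_def by (intro sum_nonneg a0)
  have bB: "b m \<le> B / 2^m" for m using B[of m] by (simp add: b_def field_simps)
  have B0: "0 \<le> B" using B[of 0] b0[of 0] by (simp add: b_def)
  have SE: "(S i)^2 \<le> 2^i * E i" for i unfolding S_def E_def by (rule block_CS)
  have pref: "(\<Sum>j\<le>k. x j) \<le> x 0 + (\<Sum>i\<le>m. S i)" if "k \<in> {2^m..<2^(m+1)}" for k m
  proof -
    have "(\<Sum>j\<le>k. x j) \<le> (\<Sum>j<2^(m+1). x j)"
      using that by (intro sum_mono2) (auto intro: x0)
    also have "\<dots> = x 0 + (\<Sum>i<Suc m. S i)"
      unfolding S_def using dyadic_split[of x "m+1"] by simp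
    finally show ?thesis by (simp add: lessThan_Suc_atMost)
  qed
  have CS: "(\<Sum>i\<le>m. S i)^2 \<le> (25/9) * (25/16)^m * (\<Sum>i\<le>m. (32/25)^i * E i)" for m
  proof -
    have "(\<Sum>i\<le>m. S i)^2 = (\<Sum>i\<le>m. (5/4)^i * (S i / (5/4)^i))^2" by simp
    also have "\<dots> \<le> (\<Sum>i\<le>m. ((5/4::real)^i)^2) * (\<Sum>i\<le>m. (S i / (5/4)^i)^2)"
      by (rule Cauchy_Schwarz_ineq_sum)
    also have "\<dots> \<le> ((25/9) * (25/16)^m) * (\<Sum>i\<le>m. (32/25)^i * E i)"
    proof (rule mult_mono)
      have "(\<Sum>i\<le>m. ((5/4::real)^i)^2) = (\<Sum>i<Suc m. (25/16::real)^i)"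
      proof -
        have "((5/4::real)^i)^2 = (25/16)^i" for i
          by (simp add: power2_eq_square power_mult_distrib[symmetric])
        then show ?thesis by (simp add: lessThan_Suc_atMost)
      qed
      also have "\<dots> = ((25/16)^Suc m - 1) / (25/16 - 1)"
        by (subst geometric_sum) auto
      also have "\<dots> \<le> (25/9) * (25/16)^m" by (simp add: field_simps)
      finally show "(\<Sum>i\<le>m. ((5/4::real)^i)^2) \<le> (25/9) * (25/16)^m" .
      show "(\<Sum>i\<le>m. (S i / (5/4)^i)^2) \<le> (\<Sum>i\<le>m. (32/25)^i * E i)"
      proof (rule sum_mono)
        fix i
        have "(S i / (5/4)^i)^2 = (S i)^2 / (25/16)^i"
          by (simp add: power_divide power2_eq_square power_mult_distrib[symmetric])
        also have "\<dots> \<le> 2^i * E i / (25/16)^i"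
          by (intro divide_right_mono SE) simp
        also have "\<dots> = (32/25)^i * E i"
        proof -
          have "(2::real)^i * 16^i = 32^i" by (simp add: power_mult_distrib[symmetric])
          then show ?thesis by (simp add: power_divide field_simps)
        qed
        finally show "(S i / (5/4)^i)^2 \<le> (32/25)^i * E i" .
      qed
      show "0 \<le> (25/9) * (25/16::real)^m" by simp
      show "0 \<le> (\<Sum>i\<le>m. (S i / (5/4::real)^i)^2)" by (intro sum_nonneg) simp
    qed
    finally show ?thesis by simp
  qed
  have blk: "(\<Sum>k\<in>{2^m..<2^(m+1)}. a k * (\<Sum>j\<le>k. x j)^2)
      \<le> 2 * B * (x 0)^2 / 2^m + 2 * B * (25/9) * (\<Sum>i\<le>m. q^m * (1/q)^i * E i)" for m
  proof -
    define P where "P = x 0 + (\<Sum>i\<le>m. S i)"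
    have "(\<Sum>k\<in>{2^m..<2^(m+1)}. a k * (\<Sum>j\<le>k. x j)^2) \<le> (\<Sum>k\<in>{2^m..<2^(m+1)}. a k * P^2)"
    proof (rule sum_mono)
      fix k :: nat assume k: "k \<in> {2^m..<2^(m+1)}"
      have "0 \<le> (\<Sum>j\<le>k. x j)" by (intro sum_nonneg x0)
      then have "(\<Sum>j\<le>k. x j)^2 \<le> P^2" using pref[OF k] unfolding P_def by (intro power_mono) auto
      then show "a k * (\<Sum>j\<le>k. x j)^2 \<le> a k * P^2" using a0 by (intro mult_left_mono) auto
    qed
    also have "\<dots> = b m * P^2" by (simp add: b_def sum_distrib_right)
    also have "\<dots> \<le> b m * (2 * (x 0)^2 + 2 * (\<Sum>i\<le>m. S i)^2)"
    proof (rule mult_left_mono[OF _ b0])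
      have "0 \<le> (x 0 - (\<Sum>i\<le>m. S i))^2" by simp
      then show "P^2 \<le> 2 * (x 0)^2 + 2 * (\<Sum>i\<le>m. S i)^2" unfolding P_def
        by (simp add: power2_eq_square algebra_simps)
    qed
    also have "\<dots> \<le> (B / 2^m) * (2 * (x 0)^2 + 2 * (\<Sum>i\<le>m. S i)^2)"
      by (intro mult_right_mono bB) simp
    also have "\<dots> \<le> (B / 2^m) * (2 * (x 0)^2 + 2 * ((25/9) * (25/16)^m * (\<Sum>i\<le>m. (32/25)^i * E i)))"
      using CS[of m] B0 by (intro mult_left_mono) auto
    also have "\<dots> = 2 * B * (x 0)^2 / 2^m + 2 * B * (25/9) * (((25/16)^m / 2^m) * (\<Sum>i\<le>m. (32/25)^i * E i))"
      by (simp add: field_simps)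
    also have "((25/16::real)^m / 2^m) * (\<Sum>i\<le>m. (32/25)^i * E i) = (\<Sum>i\<le>m. q^m * (1/q)^i * E i)"
    proof -
      have "(2::real)^m * 16^m = 32^m" by (simp add: power_mult_distrib[symmetric])
      then show ?thesis by (simp add: sum_distrib_left q_def power_divide field_simps)
    qed
    finally show ?thesis .
  qed
  have "(\<Sum>k<2^M. a k * (\<Sum>j\<le>k. x j)^2) = a 0 * (x 0)^2 +
        (\<Sum>m<M. \<Sum>k\<in>{2^m..<2^(m+1)}. a k * (\<Sum>j\<le>k. x j)^2)"
    by (subst dyadic_split) simp
  also have "\<dots> \<le> a 0 * (x 0)^2 + (\<Sum>m<M. 2 * B * (x 0)^2 / 2^m + 2 * B * (25/9) * (\<Sum>i\<le>m. q^m * (1/q)^i * E i))"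
    by (intro add_left_mono sum_mono blk)
  also have "\<dots> = a 0 * (x 0)^2 + 2 * B * (x 0)^2 * (\<Sum>m<M. (1/2)^m) + 2 * B * (25/9) * (\<Sum>m<M. \<Sum>i\<le>m. q^m * (1/q)^i * E i)"
    by (simp add: sum.distrib sum_distrib_left power_divide)
  finally have step1: "(\<Sum>k<2^M. a k * (\<Sum>j\<le>k. x j)^2) \<le> a 0 * (x 0)^2 + 2 * B * (x 0)^2 * (\<Sum>m<M. (1/2)^m) + 2 * B * (25/9) * (\<Sum>m<M. \<Sum>i\<le>m. q^m * (1/q)^i * E i)" .
  have g2: "(\<Sum>m<M. (1/2::real)^m) \<le> 2"
    using geom_tail_bound[of "1/2" 0 M] by (simp add: atLeast0LessThan)
  have dbl: "(\<Sum>m<M. \<Sum>i\<le>m. q^m * (1/q)^i * E i) \<le> (32/7) * (\<Sum>i<M. E i)"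
  proof -
    have "(\<Sum>m<M. \<Sum>i\<le>m. q^m * (1/q)^i * E i) = (\<Sum>m\<in>{..<M}. \<Sum>i\<in>{i\<in>{..<M}. i \<le> m}. q^m * (1/q)^i * E i)"
      by (intro sum.cong) auto
    also have "\<dots> = (\<Sum>i\<in>{..<M}. \<Sum>m | m \<in> {..<M} \<and> i \<le> m. q^m * (1/q)^i * E i)"
      by (rule sum.swap_restrict) auto
    also have "\<dots> = (\<Sum>i<M. (1/q)^i * E i * (\<Sum>m\<in>{i..<M}. q^m))"
      by (intro sum.cong refl) (auto simp: sum_distrib_left intro!: sum.cong simp: mult_ac)
    also have "\<dots> \<le> (\<Sum>i<M. (1/q)^i * E i * (q^i / (1 - q)))"
      by (intro sum_mono mult_left_mono geom_tail_bound) (auto simp: q_def E0)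
    also have "\<dots> = (\<Sum>i<M. (32/7) * E i)"
      by (intro sum.cong refl) (simp add: q_def power_divide field_simps)
    finally show ?thesis by (simp add: sum_distrib_left)
  qed
  have "2 * B * (x 0)^2 * (\<Sum>m<M. (1/2)^m) \<le> 2 * B * (x 0)^2 * 2"
    using g2 B0 by (intro mult_left_mono) auto
  moreover have "2 * B * (25/9) * (\<Sum>m<M. \<Sum>i\<le>m. q^m * (1/q)^i * E i) \<le> 2 * B * (25/9) * ((32/7) * (\<Sum>i<M. E i))"
    using dbl B0 by (intro mult_left_mono) auto
  ultimately have main: "(\<Sum>k<2^M. a k * (\<Sum>j\<le>k. x j)^2) \<le> a 0 * (x 0)^2 + 2 * B * (x 0)^2 * 2 + 2 * B * (25/9) * ((32/7) * (\<Sum>i<M. E i))"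
    using step1 by linarith
  have sE: "(\<Sum>i<M. E i) \<le> (\<Sum>j<2^M. (x j)^2)"
  proof -
    have "(\<Sum>i<M. E i) = (\<Sum>j\<in>{1..<2^M}. (x j)^2)" unfolding E_def by (rule dyadic_split1[symmetric])
    also have "\<dots> \<le> (\<Sum>j<2^M. (x j)^2)" by (intro sum_mono2) auto
    finally show ?thesis .
  qed
  have sx: "(x 0)^2 \<le> (\<Sum>j<2^M. (x j)^2)"
    using member_le_sum[of 0 "{..<2^M}" "\<lambda>j. (x j)^2"] by simp
  have "a 0 * (x 0)^2 + 2 * B * (x 0)^2 * 2 + 2 * B * (25/9) * ((32/7) * (\<Sum>i<M. E i))
      \<le> a 0 * (\<Sum>j<2^M. (x j)^2) + 4 * B * (\<Sum>j<2^M. (x j)^2) + 2 * B * (25/9) * ((32/7) * (\<Sum>j<2^M. (x j)^2))"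
    using sE sx B0 a0[of 0] by (intro add_mono mult_left_mono) (auto intro: mult_left_mono)
  with main show ?thesis by (simp add: algebra_simps)
qed

lemma iii_imp_i:
  fixes \<alpha> :: "nat \<Rightarrow> complex"
  assumes B: "\<forall>n::nat. 2 ^ n * (\<Sum>j\<in>{2 ^ n..<2 ^ (n + 1)}. (cmod (\<alpha> j))^2) \<le> (B::real)"
  shows "rhaly_bounded \<alpha>"
proof -
  define K where "K = (cmod (\<alpha> 0))^2 + 4*B + 2*B*(25/9)*(32/7)"
  have main: "ell2 (rhaly \<alpha> f) \<and> ell2_norm_sq (rhaly \<alpha> f) \<le> K * ell2_norm_sq f" if f: "ell2 f" for f
  proof -
    have sf: "summable (\<lambda>n. (cmod (f n))^2)" using f by (simp add: ell2_def)
    have bnd: "(\<Sum>k<N. (cmod (rhaly \<alpha> f k))^2) \<le> K * ell2_norm_sq f" for N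
    proof -
      have "N < 2^N" by (rule less_exp)
      have "(\<Sum>k<N. (cmod (rhaly \<alpha> f k))^2) \<le> (\<Sum>k<2^N. (cmod (rhaly \<alpha> f k))^2)"
        using \<open>N < 2^N\<close> by (intro sum_mono2) auto
      also have "\<dots> \<le> (\<Sum>k<2^N. (cmod (\<alpha> k))^2 * (\<Sum>j\<le>k. cmod (f j))^2)"
      proof (rule sum_mono)
        fix k
        have "cmod (\<Sum>j\<le>k. f j) \<le> (\<Sum>j\<le>k. cmod (f j))" by (rule norm_sum)
        then have "(cmod (\<Sum>j\<le>k. f j))^2 \<le> (\<Sum>j\<le>k. cmod (f j))^2" by (intro power_mono) auto
        then show "(cmod (rhaly \<alpha> f k))^2 \<le> (cmod (\<alpha> k))^2 * (\<Sum>j\<le>k. cmod (f j))^2"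
          by (simp add: rhaly_def norm_mult power_mult_distrib mult_left_mono)
      qed
      also have "\<dots> \<le> K * (\<Sum>j<2^N. (cmod (f j))^2)"
        unfolding K_def by (rule hardy_dyadic) (use B in auto)
      also have "\<dots> \<le> K * ell2_norm_sq f"
      proof (rule mult_left_mono)
        show "(\<Sum>j<2^N. (cmod (f j))^2) \<le> ell2_norm_sq f"
          unfolding ell2_norm_sq_def by (rule sum_le_suminf[OF sf]) auto
        have "0 \<le> B" using B[rule_format, of 0] sum_nonneg[of "{1..<2::nat}" "\<lambda>j. (cmod (\<alpha> j))^2"] by auto
        then show "0 \<le> K" unfolding K_def by simp
      qed
      finally show ?thesis .
    qed
    have s: "summable (\<lambda>k. (cmod (rhaly \<alpha> f k))^2)"
      by (rule summableI_nonneg_bounded[OF _ bnd]) simp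
    then show ?thesis unfolding ell2_def
      using suminf_le_const[OF s bnd] by (simp add: ell2_norm_sq_def)
  qed
  then show ?thesis unfolding rhaly_bounded_def by blast
qed

lemma i_imp_iii:
  fixes \<alpha> :: "nat \<Rightarrow> complex"
  assumes "rhaly_bounded \<alpha>"
  shows "\<exists>B. \<forall>n::nat. 2 ^ n * (\<Sum>j\<in>{2 ^ n..<2 ^ (n + 1)}. (cmod (\<alpha> j))^2) \<le> (B::real)"
proof -
  obtain C where C: "\<And>f. ell2 f \<Longrightarrow> ell2 (rhaly \<alpha> f) \<and> ell2_norm_sq (rhaly \<alpha> f) \<le> C * ell2_norm_sq f"
    using assms unfolding rhaly_bounded_def by blast
  have "2 ^ n * (\<Sum>j\<in>{2 ^ n..<2 ^ (n + 1)}. (cmod (\<alpha> j))^2) \<le> C" for n :: nat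
  proof -
    define f :: "nat \<Rightarrow> complex" where "f j = (if j < 2^n then 1 else 0)" for j
    have fin: "(cmod (f j))^2 = 0" if "j \<notin> {..<2^n}" for j using that by (simp add: f_def)
    have "ell2 f" unfolding ell2_def by (rule summable_finite[of "{..<2^n}"]) (use fin in auto)
    have nf: "ell2_norm_sq f = 2^n"
      unfolding ell2_norm_sq_def by (subst suminf_finite[of "{..<2^n}"]) (use fin in \<open>auto simp: f_def\<close>)
    from C[OF \<open>ell2 f\<close>] have R: "ell2 (rhaly \<alpha> f)" "ell2_norm_sq (rhaly \<alpha> f) \<le> C * 2^n"
      using nf by auto
    have sumf: "(\<Sum>j\<le>k. f j) = 2^n" if "k \<in> {2^n..<2^(n+1)}" for k
    proof -
      have "{..k} = {..<2^n} \<union> {2^n..k}" using that by auto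
      then have "(\<Sum>j\<le>k. f j) = (\<Sum>j<2^n. f j) + (\<Sum>j\<in>{2^n..k}. f j)"
        by (simp only:) (rule sum.union_disjoint, auto)
      also have "\<dots> = 2^n" by (simp add: f_def)
      finally show ?thesis .
    qed
    have "(\<Sum>j\<in>{2 ^ n..<2 ^ (n + 1)}. (cmod (\<alpha> j))^2) * (2^n * 2^n)
        = (\<Sum>j\<in>{2 ^ n..<2 ^ (n + 1)}. (cmod (rhaly \<alpha> f j))^2)"
      unfolding sum_distrib_right
      by (intro sum.cong refl) (simp add: rhaly_def sumf norm_mult power_mult_distrib norm_power
          power2_eq_square)
    also have "\<dots> \<le> ell2_norm_sq (rhaly \<alpha> f)"
      unfolding ell2_norm_sq_def using R(1) unfolding ell2_def by (intro sum_le_suminf) auto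
    also have "\<dots> \<le> C * 2^n" by (rule R(2))
    finally show ?thesis by (simp add: field_simps)
  qed
  then show ?thesis by blast
qed


definition sqi :: "(real \<Rightarrow> complex) \<Rightarrow> bool" where
  "sqi u \<longleftrightarrow> u \<in> borel_measurable borel \<and>
     integrable lborel (\<lambda>\<theta>. indicator {-pi..pi} \<theta> * (cmod (u \<theta>))^2)"

definition I2 :: "(real \<Rightarrow> complex) \<Rightarrow> real" where
  "I2 u = integral\<^sup>L lborel (\<lambda>\<theta>. indicator {-pi..pi} \<theta> * (cmod (u \<theta>))^2)"

lemma I2_nonneg: "0 \<le> I2 u"
  unfolding I2_def by (intro integral_nonneg_AE AE_I2) auto

lemma dist_I2: "L2_dist_circle g h = sqrt (I2 (\<lambda>\<theta>. g \<theta> - h \<theta>) / (2 * pi))"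
  unfolding L2_dist_circle_def I2_def set_lebesgue_integral_def by simp

lemma L2_circle_sqi: "L2_circle g \<longleftrightarrow> sqi g \<and> (\<forall>\<theta>. g (\<theta> + 2 * pi) = g \<theta>)"
  unfolding L2_circle_def sqi_def set_integrable_def by auto

lemma sqi_bound:
  assumes "sqi u" "v \<in> borel_measurable borel" "\<And>\<theta>. cmod (v \<theta>) \<le> c * cmod (u \<theta>)"
  shows "sqi v"
  unfolding sqi_def
proof (intro conjI assms(2))
  have "integrable lborel (\<lambda>\<theta>. c^2 * (indicator {-pi..pi} \<theta> * (cmod (u \<theta>))^2))"
    using assms(1) unfolding sqi_def by auto
  then show "integrable lborel (\<lambda>\<theta>. indicator {-pi..pi} \<theta> * (cmod (v \<theta>))^2)"
  proof (rule Bochner_Integration.integrable_bound)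
    show "(\<lambda>\<theta>. indicator {-pi..pi} \<theta> * (cmod (v \<theta>))^2) \<in> borel_measurable lborel"
      using assms(2) by measurable
    show "AE \<theta> in lborel. norm (indicator {-pi..pi} \<theta> * (cmod (v \<theta>))^2) \<le>
        norm (c^2 * (indicator {-pi..pi} \<theta> * (cmod (u \<theta>))^2))"
    proof (intro AE_I2)
      fix \<theta>
      have "(cmod (v \<theta>))^2 \<le> (c * cmod (u \<theta>))^2"
        using assms(3)[of \<theta>] by (intro power_mono) auto
      then show "norm (indicator {-pi..pi} \<theta> * (cmod (v \<theta>))^2) \<le>
        norm (c^2 * (indicator {-pi..pi} \<theta> * (cmod (u \<theta>))^2))"
        by (auto simp: indicator_def power_mult_distrib)
    qed
  qed
qed

lemma sqi_add:
  assumes "sqi u" "sqi v"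
  shows "sqi (\<lambda>\<theta>. u \<theta> + v \<theta>)"
  unfolding sqi_def
proof (intro conjI)
  show m: "(\<lambda>\<theta>. u \<theta> + v \<theta>) \<in> borel_measurable borel"
    using assms unfolding sqi_def by auto
  have "integrable lborel (\<lambda>\<theta>. 2 * (indicator {-pi..pi} \<theta> * (cmod (u \<theta>))^2) + 2 * (indicator {-pi..pi} \<theta> * (cmod (v \<theta>))^2))"
    using assms unfolding sqi_def by auto
  then show "integrable lborel (\<lambda>\<theta>. indicator {-pi..pi} \<theta> * (cmod (u \<theta> + v \<theta>))^2)"
  proof (rule Bochner_Integration.integrable_bound)
    show "(\<lambda>\<theta>. indicator {-pi..pi} \<theta> * (cmod (u \<theta> + v \<theta>))^2) \<in> borel_measurable lborel"
      using m by measurable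
    show "AE \<theta> in lborel. norm (indicator {-pi..pi} \<theta> * (cmod (u \<theta> + v \<theta>))^2) \<le>
        norm (2 * (indicator {-pi..pi} \<theta> * (cmod (u \<theta>))^2) + 2 * (indicator {-pi..pi} \<theta> * (cmod (v \<theta>))^2))"
    proof (intro AE_I2)
      fix \<theta>
      have "(cmod (u \<theta> + v \<theta>))^2 \<le> (cmod (u \<theta>) + cmod (v \<theta>))^2"
        by (intro power_mono norm_triangle_ineq) auto
      also have "\<dots> \<le> 2 * (cmod (u \<theta>))^2 + 2 * (cmod (v \<theta>))^2"
        using sum_squares_bound[of "cmod (u \<theta>)" "cmod (v \<theta>)"]
        by (simp add: power2_eq_square algebra_simps)
      finally show "norm (indicator {-pi..pi} \<theta> * (cmod (u \<theta> + v \<theta>))^2) \<le>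
        norm (2 * (indicator {-pi..pi} \<theta> * (cmod (u \<theta>))^2) + 2 * (indicator {-pi..pi} \<theta> * (cmod (v \<theta>))^2))"
        by (auto simp: indicator_def)
    qed
  qed
qed

lemma sqi_scale: "sqi u \<Longrightarrow> sqi (\<lambda>\<theta>. c * u \<theta>)"
  by (rule sqi_bound[where c = "cmod c"]) (auto simp: sqi_def norm_mult)

lemma sqi_uminus: "sqi u \<Longrightarrow> sqi (\<lambda>\<theta>. - u \<theta>)"
  by (rule sqi_bound[where c = 1]) (auto simp: sqi_def)

lemma sqi_diff: "sqi u \<Longrightarrow> sqi v \<Longrightarrow> sqi (\<lambda>\<theta>. u \<theta> - v \<theta>)"
  using sqi_add[of u "\<lambda>\<theta>. - v \<theta>"] sqi_uminus[of v] by simp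

lemma sqi_cont:
  assumes "continuous_on UNIV u"
  shows "sqi u"
  unfolding sqi_def
proof
  show "u \<in> borel_measurable borel" using assms by (rule borel_measurable_continuous_onI)
  have "continuous_on {-pi..pi} (\<lambda>\<theta>. (cmod (u \<theta>))^2)"
    using assms by (intro continuous_intros) (auto intro: continuous_on_subset)
  then have "set_integrable lborel {-pi..pi} (\<lambda>\<theta>. (cmod (u \<theta>))^2)"
    by (rule borel_integrable_atLeastAtMost')
  then show "integrable lborel (\<lambda>\<theta>. indicator {-pi..pi} \<theta> * (cmod (u \<theta>))^2)"
    by (simp add: set_integrable_def)
qed

lemma CS_aux:
  fixes X A B :: real
  assumes "A \<ge> 0" "B \<ge> 0" "\<And>s. s > 0 \<Longrightarrow> 2 * X \<le> s * A + B / s"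
  shows "X \<le> sqrt A * sqrt B"
proof (cases "A > 0 \<and> B > 0")
  case True
  define s where "s = sqrt B / sqrt A"
  have "s > 0" using True by (simp add: s_def)
  have "s * A = sqrt A * sqrt B" using True
    by (simp add: s_def field_simps)
  moreover have "B / s = sqrt A * sqrt B" using True
    by (simp add: s_def field_simps)
  ultimately show ?thesis using assms(3)[OF \<open>s > 0\<close>] by simp
next
  case False
  then have z: "A = 0 \<or> B = 0" using assms by auto
  show ?thesis
  proof (rule ccontr)
    assume "\<not> ?thesis"
    then have X: "X > 0" using z by auto
    show False
    proof (cases "A = 0")
      case True
      define s where "s = (B + 1) / X"
      have "s > 0" using X assms by (simp add: s_def)
      have "B / s = B * X / (B + 1)" using X assms by (simp add: s_def)
      also have "\<dots> < X" using X assms by (simp add: field_simps)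
      finally show False using assms(3)[OF \<open>s > 0\<close>] True X by simp
    next
      case False
      then have "B = 0" using z by simp
      define s where "s = X / (A + 1)"
      have "s > 0" using X assms by (simp add: s_def)
      have "s * A = X * A / (A + 1)" by (simp add: s_def)
      also have "\<dots> < X" using X assms by (simp add: field_simps)
      finally show False using assms(3)[OF \<open>s > 0\<close>] \<open>B = 0\<close> X by simp
    qed
  qed
qed

lemma I2_triangle:
  assumes u: "sqi u" and v: "sqi v"
  shows "sqrt (I2 (\<lambda>\<theta>. u \<theta> + v \<theta>)) \<le> sqrt (I2 u) + sqrt (I2 v)"
proof -
  let ?i = "\<lambda>\<theta>. indicator {-pi..pi} \<theta> :: real"
  have mu: "u \<in> borel_measurable borel" and mv: "v \<in> borel_measurable borel"
    using u v by (auto simp: sqi_def)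
  have iu: "integrable lborel (\<lambda>\<theta>. ?i \<theta> * (cmod (u \<theta>))^2)" and
       iv: "integrable lborel (\<lambda>\<theta>. ?i \<theta> * (cmod (v \<theta>))^2)"
    using u v by (auto simp: sqi_def)
  have iuv: "integrable lborel (\<lambda>\<theta>. ?i \<theta> * (cmod (u \<theta> + v \<theta>))^2)"
    using sqi_add[OF u v] by (auto simp: sqi_def)
  have ip: "integrable lborel (\<lambda>\<theta>. ?i \<theta> * (cmod (u \<theta>) * cmod (v \<theta>)))"
  proof (rule Bochner_Integration.integrable_bound)
    show "integrable lborel (\<lambda>\<theta>. ?i \<theta> * (cmod (u \<theta>))^2 + ?i \<theta> * (cmod (v \<theta>))^2)"
      using iu iv by auto
    show "(\<lambda>\<theta>. ?i \<theta> * (cmod (u \<theta>) * cmod (v \<theta>))) \<in> borel_measurable lborel"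
      using mu mv by measurable
    show "AE \<theta> in lborel. norm (?i \<theta> * (cmod (u \<theta>) * cmod (v \<theta>))) \<le>
       norm (?i \<theta> * (cmod (u \<theta>))^2 + ?i \<theta> * (cmod (v \<theta>))^2)"
    proof (intro AE_I2)
      fix \<theta>
      have "2 * cmod (u \<theta>) * cmod (v \<theta>) \<le> (cmod (u \<theta>))^2 + (cmod (v \<theta>))^2"
        using sum_squares_bound[of "cmod (u \<theta>)" "cmod (v \<theta>)"] by (simp add: power2_eq_square)
      moreover have "0 \<le> cmod (u \<theta>) * cmod (v \<theta>)" by simp
      ultimately have "cmod (u \<theta>) * cmod (v \<theta>) \<le> (cmod (u \<theta>))^2 + (cmod (v \<theta>))^2" by linarith
      then show "norm (?i \<theta> * (cmod (u \<theta>) * cmod (v \<theta>))) \<le>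
       norm (?i \<theta> * (cmod (u \<theta>))^2 + ?i \<theta> * (cmod (v \<theta>))^2)"
        by (auto simp: indicator_def)
    qed
  qed
  define X where "X = integral\<^sup>L lborel (\<lambda>\<theta>. ?i \<theta> * (cmod (u \<theta>) * cmod (v \<theta>)))"
  have X: "X \<le> sqrt (I2 u) * sqrt (I2 v)"
  proof (rule CS_aux[OF I2_nonneg I2_nonneg])
    fix s :: real assume s: "s > 0"
    have "2 * X = integral\<^sup>L lborel (\<lambda>\<theta>. 2 * (?i \<theta> * (cmod (u \<theta>) * cmod (v \<theta>))))"
      by (simp add: X_def)
    also have "\<dots> \<le> integral\<^sup>L lborel (\<lambda>\<theta>. s * (?i \<theta> * (cmod (u \<theta>))^2) + (1/s) * (?i \<theta> * (cmod (v \<theta>))^2))"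
    proof (rule integral_mono)
      show "integrable lborel (\<lambda>\<theta>. 2 * (?i \<theta> * (cmod (u \<theta>) * cmod (v \<theta>))))" using ip by auto
      show "integrable lborel (\<lambda>\<theta>. s * (?i \<theta> * (cmod (u \<theta>))^2) + (1/s) * (?i \<theta> * (cmod (v \<theta>))^2))"
        using iu iv by auto
      fix \<theta>
      have "0 \<le> (s * cmod (u \<theta>) - cmod (v \<theta>))^2 / s" using s by simp
      then have "2 * (cmod (u \<theta>) * cmod (v \<theta>)) \<le> s * (cmod (u \<theta>))^2 + (1/s) * (cmod (v \<theta>))^2"
        using s by (simp add: power2_eq_square field_simps)
      then show "2 * (?i \<theta> * (cmod (u \<theta>) * cmod (v \<theta>))) \<le> s * (?i \<theta> * (cmod (u \<theta>))^2) + (1/s) * (?i \<theta> * (cmod (v \<theta>))^2)"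
        by (auto simp: indicator_def)
    qed
    also have "\<dots> = s * I2 u + I2 v / s"
      using iu iv by (simp add: I2_def)
    finally show "2 * X \<le> s * I2 u + I2 v / s" .
  qed
  have "I2 (\<lambda>\<theta>. u \<theta> + v \<theta>) \<le> integral\<^sup>L lborel (\<lambda>\<theta>. ?i \<theta> * (cmod (u \<theta>))^2 + ?i \<theta> * (cmod (v \<theta>))^2 + 2 * (?i \<theta> * (cmod (u \<theta>) * cmod (v \<theta>))))"
    unfolding I2_def
  proof (rule integral_mono[OF iuv])
    show "integrable lborel (\<lambda>\<theta>. ?i \<theta> * (cmod (u \<theta>))^2 + ?i \<theta> * (cmod (v \<theta>))^2 + 2 * (?i \<theta> * (cmod (u \<theta>) * cmod (v \<theta>))))"
      using iu iv ip by auto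
    fix \<theta>
    have "(cmod (u \<theta> + v \<theta>))^2 \<le> (cmod (u \<theta>) + cmod (v \<theta>))^2"
      by (intro power_mono norm_triangle_ineq) auto
    then show "?i \<theta> * (cmod (u \<theta> + v \<theta>))^2 \<le> ?i \<theta> * (cmod (u \<theta>))^2 + ?i \<theta> * (cmod (v \<theta>))^2 + 2 * (?i \<theta> * (cmod (u \<theta>) * cmod (v \<theta>)))"
      by (auto simp: indicator_def power2_eq_square algebra_simps)
  qed
  also have "\<dots> = I2 u + I2 v + 2 * X"
    using iu iv ip by (simp add: I2_def X_def)
  also have "\<dots> \<le> (sqrt (I2 u) + sqrt (I2 v))^2"
    using X I2_nonneg[of u] I2_nonneg[of v] by (simp add: power2_eq_square algebra_simps)
  finally show ?thesis
    by (metis add_nonneg_nonneg real_le_lsqrt real_sqrt_ge_zero I2_nonneg)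
qed

lemma nn_shift:
  fixes G :: "real \<Rightarrow> ennreal"
  assumes "G \<in> borel_measurable borel"
  shows "(\<integral>\<^sup>+ x. G (x + c) \<partial>lborel) = (\<integral>\<^sup>+ x. G x \<partial>lborel)"
  using nn_integral_real_affine[OF assms, of 1 c] by (simp add: add.commute)

lemma meas_ind_sq: "v \<in> borel_measurable borel \<Longrightarrow> (\<lambda>x. indicator {-pi..pi} x * (cmod (v x))^2) \<in> borel_measurable borel"
  by measurable

lemma meas_ind_ivl: "(indicator {a..<b::real} :: real \<Rightarrow> ennreal) \<in> borel_measurable borel"
  by (intro borel_measurable_indicator) auto

lemma meas_shift:
  fixes c :: real
  assumes "u \<in> borel_measurable borel"
  shows "(\<lambda>x. u (x + c)) \<in> borel_measurable borel"
proof -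
  have "(\<lambda>x::real. x + c) \<in> borel_measurable borel" by simp
  from measurable_compose[OF this assms] show ?thesis by simp
qed

lemma per_shift:
  fixes F :: "real \<Rightarrow> ennreal"
  assumes m: "F \<in> borel_measurable borel" and per: "\<And>x. F (x + 2*pi) = F x"
  shows "(\<integral>\<^sup>+ x. F x * indicator {p..<q} x \<partial>lborel) = (\<integral>\<^sup>+ x. F x * indicator {p+2*pi..<q+2*pi} x \<partial>lborel)"
proof -
  let ?G = "\<lambda>y. F y * indicator {p+2*pi..<q+2*pi} y"
  have "?G \<in> borel_measurable borel" using m by measurable
  then have "(\<integral>\<^sup>+ x. ?G (x + 2*pi) \<partial>lborel) = (\<integral>\<^sup>+ x. ?G x \<partial>lborel)" by (rule nn_shift)
  moreover have "?G (x + 2*pi) = F x * indicator {p..<q} x" for x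
    using per[of x] by (auto simp: indicator_def)
  ultimately show ?thesis by simp
qed

lemma J_eq:
  fixes F :: "real \<Rightarrow> ennreal"
  assumes m: "F \<in> borel_measurable borel" and per: "\<And>x. F (x + 2*pi) = F x"
    and ab: "a \<le> b" "b \<le> a + 2*pi"
  shows "(\<integral>\<^sup>+ x. F x * indicator {a..<a+2*pi} x \<partial>lborel) = (\<integral>\<^sup>+ x. F x * indicator {b..<b+2*pi} x \<partial>lborel)"
proof -
  have "(\<integral>\<^sup>+ x. F x * indicator {a..<a+2*pi} x \<partial>lborel)
      = (\<integral>\<^sup>+ x. F x * indicator {a..<b} x + F x * indicator {b..<a+2*pi} x \<partial>lborel)"
    using ab by (intro nn_integral_cong) (auto simp: indicator_def)
  also have "\<dots> = (\<integral>\<^sup>+ x. F x * indicator {a..<b} x \<partial>lborel) + (\<integral>\<^sup>+ x. F x * indicator {b..<a+2*pi} x \<partial>lborel)"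
    using m by (intro nn_integral_add) auto
  also have "(\<integral>\<^sup>+ x. F x * indicator {a..<b} x \<partial>lborel) = (\<integral>\<^sup>+ x. F x * indicator {a+2*pi..<b+2*pi} x \<partial>lborel)"
    by (rule per_shift[OF m per])
  also have "(\<integral>\<^sup>+ x. F x * indicator {a+2*pi..<b+2*pi} x \<partial>lborel) + (\<integral>\<^sup>+ x. F x * indicator {b..<a+2*pi} x \<partial>lborel)
      = (\<integral>\<^sup>+ x. F x * indicator {a+2*pi..<b+2*pi} x + F x * indicator {b..<a+2*pi} x \<partial>lborel)"
    using m by (intro nn_integral_add[symmetric]) auto
  also have "\<dots> = (\<integral>\<^sup>+ x. F x * indicator {b..<b+2*pi} x \<partial>lborel)"
    using ab by (intro nn_integral_cong) (auto simp: indicator_def)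
  finally show ?thesis .
qed

lemma nn_translate:
  fixes F :: "real \<Rightarrow> ennreal"
  assumes m: "F \<in> borel_measurable borel" and per: "\<And>x. F (x + 2*pi) = F x"
    and t: "t \<in> {-pi..pi}"
  shows "(\<integral>\<^sup>+ x. F (x - t) * indicator {-pi..pi} x \<partial>lborel) = (\<integral>\<^sup>+ x. F x * indicator {-pi..pi} x \<partial>lborel)"
proof -
  have ae: "AE x in lborel. H x * indicator {-pi..pi} x = H x * indicator {-pi..<pi} x" for H :: "real \<Rightarrow> ennreal"
    using AE_lborel_singleton[of pi] by eventually_elim (auto simp: indicator_def)
  have "(\<integral>\<^sup>+ x. F (x - t) * indicator {-pi..pi} x \<partial>lborel) = (\<integral>\<^sup>+ x. F (x - t) * indicator {-pi..<pi} x \<partial>lborel)"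
    by (rule nn_integral_cong_AE[OF ae])
  also have "\<dots> = (\<integral>\<^sup>+ x. (\<lambda>y. F y * indicator {-pi-t..<(-pi-t)+2*pi} y) (x + (-t)) \<partial>lborel)"
    by (intro nn_integral_cong) (auto simp: indicator_def)
  also have "\<dots> = (\<integral>\<^sup>+ y. F y * indicator {-pi-t..<(-pi-t)+2*pi} y \<partial>lborel)"
    using m meas_ind_ivl by (intro nn_shift) measurable
  also have "\<dots> = (\<integral>\<^sup>+ y. F y * indicator {-pi..<-pi+2*pi} y \<partial>lborel)"
  proof (cases "t \<ge> 0")
    case True
    then show ?thesis using t by (intro J_eq[OF m per]) auto
  next
    case False
    then show ?thesis using t by (intro J_eq[OF m per, symmetric]) auto
  qed
  also have "\<dots> = (\<integral>\<^sup>+ x. F x * indicator {-pi..pi} x \<partial>lborel)"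
    using ae[of F] by (intro nn_integral_cong_AE) (auto elim!: AE_mp)
  finally show ?thesis .
qed

lemma I2_translate:
  assumes u: "sqi u" and per: "\<And>x. u (x + 2*pi) = u x" and t: "t \<in> {-pi..pi}"
  shows "sqi (\<lambda>x. u (x - t))" "I2 (\<lambda>x. u (x - t)) = I2 u"
proof -
  have mu: "u \<in> borel_measurable borel" and iu: "integrable lborel (\<lambda>\<theta>. indicator {-pi..pi} \<theta> * (cmod (u \<theta>))^2)"
    using u by (auto simp: sqi_def)
  have mut: "(\<lambda>x. u (x - t)) \<in> borel_measurable borel"
    using meas_shift[OF mu, of "-t"] by simp
  define F where "F x = ennreal ((cmod (u x))^2)" for x
  have mF: "F \<in> borel_measurable borel" unfolding F_def using mu by measurable
  have perF: "F (x + 2*pi) = F x" for x using per[of x] by (simp add: F_def)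
  have e1: "(\<integral>\<^sup>+ x. ennreal (indicator {-pi..pi} x * (cmod (u (x - t)))^2) \<partial>lborel)
      = (\<integral>\<^sup>+ x. F (x - t) * indicator {-pi..pi} x \<partial>lborel)"
    by (intro nn_integral_cong) (auto simp: F_def indicator_def)
  also have "\<dots> = (\<integral>\<^sup>+ x. F x * indicator {-pi..pi} x \<partial>lborel)"
    by (rule nn_translate[OF mF perF t])
  also have "\<dots> = (\<integral>\<^sup>+ x. ennreal (indicator {-pi..pi} x * (cmod (u x))^2) \<partial>lborel)"
    by (intro nn_integral_cong) (auto simp: F_def indicator_def)
  also have "\<dots> = ennreal (I2 u)"
    unfolding I2_def by (rule nn_integral_eq_integral[OF iu]) auto
  finally have e: "(\<integral>\<^sup>+ x. ennreal (indicator {-pi..pi} x * (cmod (u (x - t)))^2) \<partial>lborel) = ennreal (I2 u)" .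
  have it: "integrable lborel (\<lambda>x. indicator {-pi..pi} x * (cmod (u (x - t)))^2)"
    by (rule integrableI_nn_integral_finite[OF _ _ e]) (use meas_ind_sq[OF mut] in auto)
  then show "sqi (\<lambda>x. u (x - t))" unfolding sqi_def using mut by auto
  have "ennreal (I2 (\<lambda>x. u (x - t))) = ennreal (I2 u)"
    unfolding I2_def[of "\<lambda>x. u (x - t)"] using nn_integral_eq_integral[OF it] e by simp
  then show "I2 (\<lambda>x. u (x - t)) = I2 u" using I2_nonneg by simp
qed


definition trig :: "(nat \<Rightarrow> complex) \<Rightarrow> nat \<Rightarrow> real \<Rightarrow> complex" where
  "trig c N \<theta> = (\<Sum>n<N. c n * exp (\<i> * of_nat n * of_real \<theta>))"

lemma exp_orth:
  fixes m n :: nat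
  shows "((\<lambda>\<theta>. exp (\<i> * (of_nat m - of_nat n) * of_real \<theta>)) has_integral (if m = n then 2 * pi else 0)) {-pi..pi}"
proof (cases "m = n")
  case True
  then show ?thesis using has_integral_const_real[of "1::complex" "-pi" pi] by (simp add: scaleR_conv_of_real)
next
  case False
  define d :: real where "d = real m - real n"
  have d0: "d \<noteq> 0" using False by (simp add: d_def)
  define k :: complex where "k = \<i> * of_real d"
  have k0: "k \<noteq> 0" using d0 by (simp add: k_def)
  have ke: "\<i> * (of_nat m - of_nat n) = k" by (simp add: k_def d_def)
  define F where "F z = exp (k * z) / k" for z
  have "((\<lambda>\<theta>. F (of_real \<theta>)) has_vector_derivative exp (k * of_real x)) (at x within {-pi..pi})" for x
  proof (rule has_vector_derivative_real_field)
    show "(F has_field_derivative exp (k * of_real x)) (at (of_real x))"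
      unfolding F_def using k0 by (auto intro!: derivative_eq_intros)
  qed
  then have "((\<lambda>\<theta>. exp (k * of_real \<theta>)) has_integral (F (of_real pi) - F (of_real (-pi)))) {-pi..pi}"
    by (intro fundamental_theorem_of_calculus) auto
  moreover have "F (of_real pi) - F (of_real (-pi)) = 0"
  proof -
    have "exp (k * of_real pi) = cis (d * pi)" by (simp add: k_def cis_conv_exp mult_ac)
    moreover have "exp (k * of_real (-pi)) = cis (- (d * pi))" by (simp add: k_def cis_conv_exp mult_ac)
    moreover have "sin (d * pi) = 0"
    proof -
      have "d * pi = pi * of_int (int m - int n)" by (simp add: d_def)
      then show ?thesis by (simp only: sin_npi_int)
    qed
    ultimately have "exp (k * of_real pi) = exp (k * of_real (-pi))" by (simp add: complex_eq_iff)
    then show ?thesis by (simp add: F_def)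
  qed
  ultimately show ?thesis using False by (simp add: ke)
qed

lemma trig_sq_has_integral:
  "((\<lambda>\<theta>. (cmod (trig c N \<theta>))^2) has_integral (2 * pi * (\<Sum>n<N. (cmod (c n))^2))) {-pi..pi}"
proof -
  have eq: "complex_of_real ((cmod (trig c N \<theta>))^2) =
      (\<Sum>m<N. \<Sum>n<N. (c m * cnj (c n)) * exp (\<i> * (of_nat m - of_nat n) * of_real \<theta>))" for \<theta>
  proof -
    have "complex_of_real ((cmod (trig c N \<theta>))^2) = trig c N \<theta> * cnj (trig c N \<theta>)"
      by (rule complex_norm_square)
    also have "\<dots> = (\<Sum>m<N. \<Sum>n<N. (c m * exp (\<i> * of_nat m * of_real \<theta>)) * (cnj (c n) * exp (- (\<i> * of_nat n * of_real \<theta>))))"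
      by (simp add: trig_def sum_product exp_cnj)
    also have "\<dots> = (\<Sum>m<N. \<Sum>n<N. (c m * cnj (c n)) * exp (\<i> * (of_nat m - of_nat n) * of_real \<theta>))"
      by (intro sum.cong refl) (simp add: algebra_simps exp_diff exp_minus field_simps)
    finally show ?thesis .
  qed
  have HI: "((\<lambda>\<theta>. \<Sum>m<N. \<Sum>n<N. (c m * cnj (c n)) * exp (\<i> * (of_nat m - of_nat n) * of_real \<theta>)) has_integral
      (\<Sum>m<N. \<Sum>n<N. (c m * cnj (c n)) * (if m = n then 2 * pi else 0))) {-pi..pi}"
    by (intro has_integral_sum finite_lessThan has_integral_mult_right exp_orth)
  have V: "(\<Sum>m<N. \<Sum>n<N. (c m * cnj (c n)) * (if m = n then 2 * pi else 0)) =
      complex_of_real (2 * pi * (\<Sum>n<N. (cmod (c n))^2))"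
  proof -
    have "(\<Sum>m<N. \<Sum>n<N. (c m * cnj (c n)) * (if m = n then 2 * pi else 0)) = (\<Sum>m<N. (c m * cnj (c m)) * 2 * pi)"
      by (intro sum.cong refl) (simp add: if_distrib sum.delta cong: if_cong)
    also have "\<dots> = complex_of_real (2 * pi * (\<Sum>n<N. (cmod (c n))^2))"
      by (simp only: of_real_mult of_real_sum complex_norm_square) (simp add: sum_distrib_left mult_ac)
    finally show ?thesis .
  qed
  have EQ: "(\<lambda>\<theta>. complex_of_real ((cmod (trig c N \<theta>))^2)) = (\<lambda>\<theta>. \<Sum>m<N. \<Sum>n<N. (c m * cnj (c n)) * exp (\<i> * (of_nat m - of_nat n) * of_real \<theta>))"
    by (intro ext eq)
  have "((\<lambda>\<theta>. complex_of_real ((cmod (trig c N \<theta>))^2)) has_integral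
      complex_of_real (2 * pi * (\<Sum>n<N. (cmod (c n))^2))) {-pi..pi}"
    unfolding EQ V[symmetric] by (rule HI)
  from has_integral_linear[OF this bounded_linear_Re] show ?thesis by (simp add: o_def)
qed

lemma trig_cont: "continuous_on UNIV (trig c N)"
  unfolding trig_def by (intro continuous_intros)

lemma sqi_trig: "sqi (trig c N)"
  by (rule sqi_cont[OF trig_cont])

lemma I2_trig: "I2 (trig c N) = 2 * pi * (\<Sum>n<N. (cmod (c n))^2)"
proof -
  have cont: "continuous_on {-pi..pi} (\<lambda>\<theta>. (cmod (trig c N \<theta>))^2)"
    using trig_cont by (intro continuous_intros) (auto intro: continuous_on_subset)
  have si: "set_integrable lborel {-pi..pi} (\<lambda>\<theta>. (cmod (trig c N \<theta>))^2)"
    by (rule borel_integrable_atLeastAtMost'[OF cont])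
  have "I2 (trig c N) = (LINT \<theta>:{-pi..pi}|lborel. (cmod (trig c N \<theta>))^2)"
    by (simp add: I2_def set_lebesgue_integral_def)
  also have "\<dots> = integral {-pi..pi} (\<lambda>\<theta>. (cmod (trig c N \<theta>))^2)"
    by (rule set_borel_integral_eq_integral(2)[OF si])
  also have "\<dots> = 2 * pi * (\<Sum>n<N. (cmod (c n))^2)"
    by (rule integral_unique[OF trig_sq_has_integral])
  finally show ?thesis .
qed

lemma trig_periodic: "trig c N (\<theta> + 2 * pi) = trig c N \<theta>"
proof -
  have "exp (\<i> * of_nat n * of_real (\<theta> + 2 * pi)) = exp (\<i> * of_nat n * of_real \<theta>)" for n
  proof -
    have "exp (\<i> * of_nat n * of_real (\<theta> + 2 * pi)) = exp (\<i> * of_nat n * of_real \<theta> + of_nat n * (2 * of_real pi * \<i>))"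
      by (simp add: algebra_simps)
    also have "\<dots> = exp (\<i> * of_nat n * of_real \<theta>) * exp (2 * of_real pi * \<i>) ^ n"
      by (simp only: exp_add exp_of_nat_mult)
    finally show ?thesis by simp
  qed
  then show ?thesis by (simp add: trig_def)
qed


lemma w_eq: fixes x :: real shows "(cmod (exp (\<i> * of_real x) - 1))^2 = 2 - 2 * cos x"
proof -
  have "(cmod (exp (\<i> * of_real x) - 1))^2 = 4 * (sin (x/2))^2"
    by (simp add: dist_exp_i_1 power_mult_distrib)
  moreover have "cos x = 1 - 2 * (sin (x/2))^2"
    using cos_double_sin[of "x/2"] by simp
  ultimately show ?thesis by simp
qed

lemma w_le_sq: fixes x :: real shows "2 - 2 * cos x \<le> x^2"
proof -
  have "cos x = 1 - 2 * (sin (x/2))^2"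
    using cos_double_sin[of "x/2"] by simp
  moreover have "(sin (x/2))^2 \<le> (x/2)^2"
    using power_mono[OF abs_sin_x_le_abs_x[of "x/2"] abs_ge_zero, of 2] by (simp add: power_divide)
  ultimately show ?thesis by (simp add: power_divide)
qed

lemma w_le_4: fixes x :: real shows "2 - 2 * cos x \<le> (4::real)"
  using cos_ge_minus_one[of x] by linarith

lemma trig_eq: "(\<lambda>\<theta>. \<Sum>n<N. \<alpha> n * exp (\<i> * of_nat n * of_real \<theta>)) = trig \<alpha> N"
  by (simp add: trig_def fun_eq_iff)

lemma trig_shift:
  "trig c N (\<theta> - t) - trig c N \<theta> = trig (\<lambda>n. c n * (exp (\<i> * of_real (- (real n * t))) - 1)) N \<theta>"
proof -
  have X: "c n * exp (\<i> * of_nat n * of_real (\<theta> - t)) - c n * exp (\<i> * of_nat n * of_real \<theta>)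
      = c n * (exp (\<i> * of_real (- (real n * t))) - 1) * exp (\<i> * of_nat n * of_real \<theta>)" for n
  proof -
    have "exp (\<i> * of_nat n * of_real (\<theta> - t)) = exp (\<i> * of_real (- (real n * t))) * exp (\<i> * of_nat n * of_real \<theta>)"
      by (simp add: exp_add[symmetric] algebra_simps)
    then show ?thesis by (simp add: algebra_simps)
  qed
  show ?thesis unfolding trig_def sum_subtractf[symmetric] by (rule sum.cong[OF refl], rule X)
qed

lemma trig_diff:
  assumes "M \<le> N"
  shows "trig c N \<theta> - trig c M \<theta> = trig (\<lambda>n. if M \<le> n then c n else 0) N \<theta>"
proof -
  have "trig c N \<theta> = trig c M \<theta> + (\<Sum>n\<in>{M..<N}. c n * exp (\<i> * of_nat n * of_real \<theta>))"
    unfolding trig_def using assms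
      sum.atLeastLessThan_concat[of 0 M N "\<lambda>n. c n * exp (\<i> * of_nat n * of_real \<theta>)"]
    by (simp add: atLeast0LessThan)
  moreover have "trig (\<lambda>n. if M \<le> n then c n else 0) N \<theta> = (\<Sum>n\<in>{M..<N}. c n * exp (\<i> * of_nat n * of_real \<theta>))"
    unfolding trig_def
    by (rule sum.mono_neutral_cong_right) auto
  ultimately show ?thesis by simp
qed

lemma shift_dist_sq:
  "I2 (\<lambda>\<theta>. trig c N (\<theta> - t) - trig c N \<theta>) = 2 * pi * (\<Sum>n<N. (cmod (c n))^2 * (2 - 2 * cos (real n * t)))"
proof -
  have "I2 (\<lambda>\<theta>. trig c N (\<theta> - t) - trig c N \<theta>) = I2 (trig (\<lambda>n. c n * (exp (\<i> * of_real (- (real n * t))) - 1)) N)"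
    by (simp add: trig_shift)
  also have "\<dots> = 2 * pi * (\<Sum>n<N. (cmod (c n))^2 * (2 - 2 * cos (real n * t)))"
  proof -
    have "(cmod (exp (\<i> * of_real (- (real n * t))) - 1))^2 = 2 - 2*cos (real n * t)" for n
      by (simp only: w_eq) simp
    then show ?thesis unfolding I2_trig by (simp only: norm_mult power_mult_distrib)
  qed
  finally show ?thesis .
qed

lemma tri3:
  assumes "sqi a" "sqi b" "sqi c"
  shows "sqrt (I2 (\<lambda>\<theta>. a \<theta> + b \<theta> + c \<theta>)) \<le> sqrt (I2 a) + sqrt (I2 b) + sqrt (I2 c)"
proof -
  have "sqrt (I2 (\<lambda>\<theta>. a \<theta> + b \<theta> + c \<theta>)) \<le> sqrt (I2 (\<lambda>\<theta>. a \<theta> + b \<theta>)) + sqrt (I2 c)"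
    using I2_triangle[OF sqi_add[OF assms(1,2)] assms(3)] by simp
  also have "\<dots> \<le> sqrt (I2 a) + sqrt (I2 b) + sqrt (I2 c)"
    using I2_triangle[OF assms(1,2)] by simp
  finally show ?thesis .
qed

lemma I2_uminus: "I2 (\<lambda>\<theta>. - u \<theta>) = I2 u"
  by (simp add: I2_def)

lemma I2_commute: "I2 (\<lambda>\<theta>. u \<theta> - v \<theta>) = I2 (\<lambda>\<theta>. v \<theta> - u \<theta>)"
  by (simp add: I2_def norm_minus_commute)

lemma shift_est:
  assumes g: "sqi g" and per: "\<And>x. g (x + 2*pi) = g x" and t: "t \<in> {-pi..pi}"
  shows "sqrt (I2 (\<lambda>\<theta>. trig c N (\<theta> - t) - trig c N \<theta>)) \<le>
     2 * sqrt (I2 (\<lambda>\<theta>. trig c N \<theta> - g \<theta>)) + sqrt (I2 (\<lambda>\<theta>. g (\<theta> - t) - g \<theta>))"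
    and "sqrt (I2 (\<lambda>\<theta>. g (\<theta> - t) - g \<theta>)) \<le>
     2 * sqrt (I2 (\<lambda>\<theta>. trig c N \<theta> - g \<theta>)) + sqrt (I2 (\<lambda>\<theta>. trig c N (\<theta> - t) - trig c N \<theta>))"
proof -
  define u where "u = (\<lambda>\<theta>. trig c N \<theta> - g \<theta>)"
  have su: "sqi u" unfolding u_def by (intro sqi_diff sqi_trig g)
  have peru: "u (x + 2*pi) = u x" for x by (simp add: u_def per trig_periodic)
  have sut: "sqi (\<lambda>\<theta>. u (\<theta> - t))" and It: "I2 (\<lambda>\<theta>. u (\<theta> - t)) = I2 u"
    using I2_translate[OF su peru t] by auto
  have sgt: "sqi (\<lambda>\<theta>. g (\<theta> - t))" using I2_translate[OF g per t] by auto
  have sg: "sqi (\<lambda>\<theta>. g (\<theta> - t) - g \<theta>)" by (intro sqi_diff sgt g)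
  have sT: "sqi (\<lambda>\<theta>. trig c N (\<theta> - t) - trig c N \<theta>)"
    by (simp only: trig_shift sqi_trig)
  have sumin: "sqi (\<lambda>\<theta>. - u \<theta>)" by (rule sqi_uminus[OF su])
  have e1: "(\<lambda>\<theta>. trig c N (\<theta> - t) - trig c N \<theta>) = (\<lambda>\<theta>. u (\<theta> - t) + (g (\<theta> - t) - g \<theta>) + - u \<theta>)"
    unfolding u_def by (rule ext) simp
  have "sqrt (I2 (\<lambda>\<theta>. trig c N (\<theta> - t) - trig c N \<theta>)) \<le> sqrt (I2 (\<lambda>\<theta>. u (\<theta> - t))) + sqrt (I2 (\<lambda>\<theta>. g (\<theta> - t) - g \<theta>)) + sqrt (I2 (\<lambda>\<theta>. - u \<theta>))"
    unfolding e1 by (rule tri3[OF sut sg sumin])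
  then show "sqrt (I2 (\<lambda>\<theta>. trig c N (\<theta> - t) - trig c N \<theta>)) \<le>
     2 * sqrt (I2 (\<lambda>\<theta>. trig c N \<theta> - g \<theta>)) + sqrt (I2 (\<lambda>\<theta>. g (\<theta> - t) - g \<theta>))"
    unfolding It I2_uminus u_def[symmetric] by linarith
  note It
  have sumt: "sqi (\<lambda>\<theta>. - u (\<theta> - t))" by (rule sqi_uminus[OF sut])
  have e2: "(\<lambda>\<theta>. g (\<theta> - t) - g \<theta>) = (\<lambda>\<theta>. - u (\<theta> - t) + (trig c N (\<theta> - t) - trig c N \<theta>) + u \<theta>)"
    unfolding u_def by (rule ext) simp
  have "sqrt (I2 (\<lambda>\<theta>. g (\<theta> - t) - g \<theta>)) \<le> sqrt (I2 (\<lambda>\<theta>. - u (\<theta> - t))) + sqrt (I2 (\<lambda>\<theta>. trig c N (\<theta> - t) - trig c N \<theta>)) + sqrt (I2 u)"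
    unfolding e2 by (rule tri3[OF sumt sT su])
  moreover have "sqrt (I2 (\<lambda>\<theta>. - u (\<theta> - t))) = sqrt (I2 u)" using I2_uminus[of "\<lambda>\<theta>. u (\<theta> - t)"] It by simp
  ultimately show "sqrt (I2 (\<lambda>\<theta>. g (\<theta> - t) - g \<theta>)) \<le>
     2 * sqrt (I2 (\<lambda>\<theta>. trig c N \<theta> - g \<theta>)) + sqrt (I2 (\<lambda>\<theta>. trig c N (\<theta> - t) - trig c N \<theta>))"
    unfolding u_def[symmetric] by linarith
qed


lemma sqrt_I2_dist: "sqrt (I2 (\<lambda>\<theta>. f \<theta> - h \<theta>)) = sqrt (2*pi) * L2_dist_circle f h"
proof -
  have "sqrt (2*pi) * L2_dist_circle f h = sqrt (2*pi * (I2 (\<lambda>\<theta>. f \<theta> - h \<theta>) / (2 * pi)))"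
    by (simp add: dist_I2 real_sqrt_mult[symmetric])
  also have "\<dots> = sqrt (I2 (\<lambda>\<theta>. f \<theta> - h \<theta>))" by simp
  finally show ?thesis by simp
qed

lemma A_mono:
  assumes "M \<le> N"
  shows "(\<Sum>n<M. (cmod (c n))^2 * (2 - 2 * cos (real n * t))) \<le> (\<Sum>n<N. (cmod (c n))^2 * (2 - 2 * cos (real n * t)))"
proof (rule sum_mono2)
  show "finite {..<N}" by simp
  show "{..<M} \<subseteq> {..<N}" using assms by auto
  fix n
  have "cos (real n * t) \<le> 1" by simp
  then show "0 \<le> (cmod (c n))^2 * (2 - 2 * cos (real n * t))" by simp
qed

lemma cos_block:
  fixes j n :: nat
  assumes "j \<in> {2^n..<2^(n+1)}"
  shows "cos (real j * (pi / 2^(n+1))) \<le> 0"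
proof -
  have n1: "2^n \<le> j" and n2: "j \<le> 2*2^n" using assms by auto
  have j1: "2^n \<le> real j" using of_nat_le_iff[of "2^n" j] n1 by simp
  have j2: "real j \<le> 2 * 2^n" using of_nat_le_iff[of j "2*2^n"] n2 by simp
  have eq: "real j * (pi / 2^(n+1)) = (real j / 2^n) * (pi/2)" by (simp add: field_simps)
  have r1: "1 \<le> real j / 2^n" and r2: "real j / 2^n \<le> 2" using j1 j2 by (auto simp: field_simps)
  have lo: "pi/2 \<le> real j * (pi / 2^(n+1))" unfolding eq using r1 mult_right_mono[OF r1, of "pi/2"] by simp
  have hi: "real j * (pi / 2^(n+1)) \<le> pi" unfolding eq using mult_right_mono[OF r2, of "pi/2"] by simp
  have "cos (real j * (pi / 2^(n+1))) \<le> cos (pi/2)"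
    using lo hi by (subst cos_mono_le_eq) auto
  then show ?thesis by simp
qed

lemma ii_imp_iii:
  assumes bf: "boundary_function \<alpha> g" and ml: "mean_lipschitz_half g"
  shows "\<exists>B. \<forall>n::nat. 2 ^ n * (\<Sum>j\<in>{2 ^ n..<2 ^ (n + 1)}. (cmod (\<alpha> j))^2) \<le> (B::real)"
proof -
  have L2: "L2_circle g" and conv: "(\<lambda>N. L2_dist_circle (trig \<alpha> N) g) \<longlonglongrightarrow> 0"
    using bf unfolding boundary_function_def trig_eq by auto
  have sg: "sqi g" and per: "\<And>x. g (x + 2*pi) = g x" using L2 by (auto simp: L2_circle_sqi)
  obtain C where C: "\<And>t. t \<in> {-pi..pi} \<Longrightarrow> L2_dist_circle (\<lambda>\<theta>. g (\<theta> - t)) g \<le> C * sqrt \<bar>t\<bar>"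
    using ml unfolding mean_lipschitz_half_def by blast
  define A where "A N t = (\<Sum>n<N. (cmod (\<alpha> n))^2 * (2 - 2 * cos (real n * t)))" for N t
  have A0: "0 \<le> A N t" for N t unfolding A_def
    by (intro sum_nonneg) (simp add: mult_nonneg_nonneg)
  have step: "sqrt (A N t) \<le> 2 * L2_dist_circle (trig \<alpha> N) g + C * sqrt \<bar>t\<bar>" if t: "t \<in> {-pi..pi}" for N t
  proof -
    have "sqrt (2*pi) * sqrt (A N t) = sqrt (I2 (\<lambda>\<theta>. trig \<alpha> N (\<theta> - t) - trig \<alpha> N \<theta>))"
      by (simp add: shift_dist_sq A_def real_sqrt_mult)
    also have "\<dots> \<le> 2 * sqrt (I2 (\<lambda>\<theta>. trig \<alpha> N \<theta> - g \<theta>)) + sqrt (I2 (\<lambda>\<theta>. g (\<theta> - t) - g \<theta>))"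
      by (rule shift_est(1)[OF sg per t])
    also have "\<dots> = sqrt (2*pi) * (2 * L2_dist_circle (trig \<alpha> N) g + L2_dist_circle (\<lambda>\<theta>. g (\<theta> - t)) g)"
      by (simp add: sqrt_I2_dist[of "trig \<alpha> N" g] sqrt_I2_dist[of "\<lambda>\<theta>. g (\<theta> - t)" g] algebra_simps)
    also have "\<dots> \<le> sqrt (2*pi) * (2 * L2_dist_circle (trig \<alpha> N) g + C * sqrt \<bar>t\<bar>)"
      using C[OF t] by (intro mult_left_mono) auto
    finally show ?thesis by simp
  qed
  have key: "A M t \<le> C^2 * \<bar>t\<bar>" if t: "t \<in> {-pi..pi}" for M t
  proof -
    have lim: "(\<lambda>N. 2 * L2_dist_circle (trig \<alpha> N) g + C * sqrt \<bar>t\<bar>) \<longlonglongrightarrow> 2 * 0 + C * sqrt \<bar>t\<bar>"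
      by (intro tendsto_intros conv)
    have "sqrt (A M t) \<le> C * sqrt \<bar>t\<bar>"
    proof (rule LIMSEQ_le_const[OF lim[simplified]])
      show "\<exists>N0. \<forall>N\<ge>N0. sqrt (A M t) \<le> 2 * L2_dist_circle (trig \<alpha> N) g + C * sqrt \<bar>t\<bar>"
      proof (intro exI allI impI)
        fix N assume "M \<le> N"
        then have "sqrt (A M t) \<le> sqrt (A N t)" unfolding A_def by (intro real_sqrt_le_mono A_mono)
        also have "\<dots> \<le> 2 * L2_dist_circle (trig \<alpha> N) g + C * sqrt \<bar>t\<bar>" by (rule step[OF t])
        finally show "sqrt (A M t) \<le> 2 * L2_dist_circle (trig \<alpha> N) g + C * sqrt \<bar>t\<bar>" .
      qed
    qed
    then have "(sqrt (A M t))^2 \<le> (C * sqrt \<bar>t\<bar>)^2"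
      using A0[of M t] by (intro power_mono) auto
    then show ?thesis using A0[of M t] by (simp add: power_mult_distrib)
  qed
  have "2 ^ n * (\<Sum>j\<in>{2 ^ n..<2 ^ (n + 1)}. (cmod (\<alpha> j))^2) \<le> C^2 * pi / 4" for n :: nat
  proof -
    define t :: real where "t = pi / 2^(n+1)"
    have "(1::real) \<le> 2^n" by simp
    then have "(1::real) \<le> 2 * 2^n" by linarith
    then have t: "t \<in> {-pi..pi}" unfolding t_def
      by (auto simp: field_simps intro: order_trans[of _ 0])
    have "(\<Sum>j\<in>{2 ^ n..<2 ^ (n + 1)}. (cmod (\<alpha> j))^2) * 2 \<le> (\<Sum>j\<in>{2 ^ n..<2 ^ (n + 1)}. (cmod (\<alpha> j))^2 * (2 - 2 * cos (real j * t)))"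
      unfolding sum_distrib_right
    proof (rule sum_mono)
      fix j assume "j \<in> {2 ^ n..<2 ^ (n + 1)::nat}"
      then have "cos (real j * t) \<le> 0" unfolding t_def by (rule cos_block)
      then show "(cmod (\<alpha> j))^2 * 2 \<le> (cmod (\<alpha> j))^2 * (2 - 2 * cos (real j * t))"
        by (intro mult_left_mono) auto
    qed
    also have "\<dots> \<le> A (2^(n+1)) t" unfolding A_def
      by (intro sum_mono2) (auto simp: mult_nonneg_nonneg)
    also have "\<dots> \<le> C^2 * \<bar>t\<bar>" by (rule key[OF t])
    also have "\<dots> = C^2 * pi / 2^(n+1)" by (simp add: t_def)
    finally have "(\<Sum>j\<in>{2 ^ n..<2 ^ (n + 1)}. (cmod (\<alpha> j))^2) * 2 \<le> C^2 * pi / 2^(n+1)" .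
    then show ?thesis by (simp add: field_simps)
  qed
  then show ?thesis by blast
qed


lemma geom_split:
  fixes f :: "nat \<Rightarrow> real" and s K :: real
  assumes s: "0 \<le> s" and K: "0 \<le> K"
    and f1: "\<And>m. f m \<le> K * 2^m * s^2" and f2: "\<And>m. f m \<le> K * (1/2)^m"
  shows "(\<Sum>m<N. f m) \<le> 4 * K * s"
proof (cases "s = 0")
  case True
  then have "f m \<le> 0" for m using f1[of m] by simp
  then have "(\<Sum>m<N. f m) \<le> 0" by (intro sum_nonpos)
  then show ?thesis using True by simp
next
  case False
  then have s0: "s > 0" using s by simp
  have ex: "\<exists>L. 1 < 2^L * s"
  proof -
    obtain L where "1/s < (2::real)^L" using real_arch_pow[of 2 "1/s"] by auto
    then have "1 < 2^L * s" using s0 by (simp add: field_simps)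
    then show ?thesis by blast
  qed
  define L where "L = (LEAST L. 1 < 2^L * (s::real))"
  have L1: "1 < 2^L * s" unfolding L_def by (rule LeastI_ex[OF ex])
  have L2: "2^m * s \<le> 1" if "m < L" for m
    using not_less_Least[OF that[unfolded L_def]] by simp
  define a where "a m = K * 2^m * s^2" for m :: nat
  define b where "b m = K * (1/2)^m" for m :: nat
  have "(\<Sum>m<N. f m) \<le> (\<Sum>m<N. if m < L then a m else b m)"
    by (intro sum_mono) (auto simp: a_def b_def f1 f2)
  also have "\<dots> = (\<Sum>m\<in>{..<N} \<inter> {m. m < L}. a m) + (\<Sum>m\<in>{..<N} \<inter> - {m. m < L}. b m)"
    by (rule sum.If_cases) simp
  also have "(\<Sum>m\<in>{..<N} \<inter> {m. m < L}. a m) \<le> (\<Sum>m<L. a m)"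
    by (intro sum_mono2) (auto simp: a_def K)
  also have "(\<Sum>m\<in>{..<N} \<inter> - {m. m < L}. b m) \<le> (\<Sum>m\<in>{L..<N}. b m)"
    by (intro sum_mono2) (auto simp: b_def K)
  also have "(\<Sum>m<L. a m) \<le> 2 * K * s"
  proof (cases L)
    case 0
    then show ?thesis using K s by simp
  next
    case (Suc L')
    have "(\<Sum>m<L. a m) = K * s^2 * (\<Sum>m<L. 2^m)" by (simp add: a_def sum_distrib_left mult_ac)
    also have "(\<Sum>m<L. (2::real)^m) = 2^L - 1" by (subst geometric_sum) auto
    also have "K * s^2 * (2^L - 1) \<le> K * s^2 * 2^L" using K by (simp add: mult_left_mono)
    also have "K * s^2 * 2^L = 2 * K * s * (2^L' * s)" using Suc by (simp add: power2_eq_square)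
    also have "\<dots> \<le> 2 * K * s * 1" using L2[of L'] Suc K s by (intro mult_left_mono) auto
    finally show ?thesis by simp
  qed
  also have "(\<Sum>m\<in>{L..<N}. b m) \<le> 2 * K * s"
  proof -
    have "(\<Sum>m\<in>{L..<N}. b m) = K * (\<Sum>m\<in>{L..<N}. (1/2)^m)" by (simp add: b_def sum_distrib_left)
    also have "\<dots> \<le> K * ((1/2)^L / (1 - 1/2))" using K by (intro mult_left_mono geom_tail_bound) auto
    also have "(1/2::real)^L < s" using L1 s0 by (simp add: power_one_over field_simps)
    then have "K * ((1/2)^L / (1 - 1/2)) \<le> 2 * K * s" using K by (simp add: mult_left_mono)
    finally show ?thesis .
  qed
  finally show ?thesis by simp
qed

lemma E_est:
  fixes \<alpha> :: "nat \<Rightarrow> complex"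
  assumes B: "\<forall>n::nat. 2 ^ n * (\<Sum>j\<in>{2 ^ n..<2 ^ (n + 1)}. (cmod (\<alpha> j))^2) \<le> (B::real)"
  shows "(\<Sum>n<N. (cmod (\<alpha> n))^2 * (2 - 2 * cos (real n * t))) \<le> 16 * B * \<bar>t\<bar>"
proof -
  define w where "w j = (cmod (\<alpha> j))^2 * (2 - 2 * cos (real j * t))" for j
  define bl where "bl m = (\<Sum>j\<in>{2 ^ m..<2 ^ (m + 1)}. w j)" for m
  define b where "b m = (\<Sum>j\<in>{2 ^ m..<2 ^ (m + 1)}. (cmod (\<alpha> j))^2)" for m
  have b0: "0 \<le> b m" for m unfolding b_def by (intro sum_nonneg) auto
  have bB: "b m \<le> B / 2^m" for m using B[rule_format, of m] by (simp add: b_def field_simps)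
  have B0: "0 \<le> B" using B[rule_format, of 0] b0[of 0] by (simp add: b_def)
  have "N < 2^N" by (rule less_exp)
  have "(\<Sum>n<N. w n) \<le> (\<Sum>n<2^N. w n)"
    using \<open>N < 2^N\<close> by (intro sum_mono2) (auto simp: w_def)
  also have "\<dots> = w 0 + (\<Sum>m<N. bl m)" unfolding bl_def by (rule dyadic_split)
  also have "w 0 = 0" by (simp add: w_def)
  also have "(\<Sum>m<N. bl m) \<le> 4 * (4 * B) * \<bar>t\<bar>"
  proof (rule geom_split)
    show "0 \<le> \<bar>t\<bar>" "0 \<le> 4 * B" using B0 by auto
    fix m
    have "bl m \<le> (\<Sum>j\<in>{2 ^ m..<2 ^ (m + 1)}. (cmod (\<alpha> j))^2 * (4 * 4^m * t^2))"
      unfolding bl_def w_def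
    proof (intro sum_mono mult_left_mono)
      fix j assume j: "j \<in> {2 ^ m..<2 ^ (m + 1)::nat}"
      have "real j \<le> 2 * 2^m" using j of_nat_le_iff[of j "2*2^m"] by simp
      then have "(real j)^2 \<le> (2 * 2^m)^2" by (intro power_mono) auto
      then have "(real j)^2 * t^2 \<le> (2 * 2^m)^2 * t^2" by (intro mult_right_mono) auto
      moreover have "(2 * (2::real)^m)^2 = 4 * 4^m"
      proof -
        have "(4::real)^m = 2^m * 2^m" by (simp add: power_mult_distrib[symmetric])
        then show ?thesis by (simp add: power2_eq_square)
      qed
      ultimately have "(real j * t)^2 \<le> 4 * 4^m * t^2" by (simp add: power_mult_distrib)
      then show "2 - 2 * cos (real j * t) \<le> 4 * 4^m * t^2" using w_le_sq[of "real j * t"] by linarith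
    qed auto
    also have "\<dots> = b m * (4 * 4^m * t^2)" by (simp add: b_def sum_distrib_right)
    also have "\<dots> \<le> (B / 2^m) * (4 * 4^m * t^2)" by (intro mult_right_mono bB) auto
    also have "\<dots> = 4 * B * 2^m * \<bar>t\<bar>^2"
    proof -
      have "(4::real)^m = 2^m * 2^m" by (simp add: power_mult_distrib[symmetric])
      then show ?thesis by (simp add: field_simps)
    qed
    finally show "bl m \<le> 4 * B * 2^m * \<bar>t\<bar>^2" .
    have "bl m \<le> (\<Sum>j\<in>{2 ^ m..<2 ^ (m + 1)}. (cmod (\<alpha> j))^2 * 4)"
      unfolding bl_def w_def by (intro sum_mono mult_left_mono w_le_4) auto
    also have "\<dots> = 4 * b m" by (simp add: b_def sum_distrib_left mult.commute)
    also have "\<dots> \<le> 4 * (B / 2^m)" using bB by (intro mult_left_mono) auto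
    also have "\<dots> = 4 * B * (1/2)^m" by (simp add: power_one_over)
    finally show "bl m \<le> 4 * B * (1/2)^m" .
  qed
  finally show ?thesis by (simp add: w_def)
qed


lemma I2_block:
  "I2 (\<lambda>\<theta>. trig \<alpha> (2^(m+1)) \<theta> - trig \<alpha> (2^m) \<theta>) = 2*pi*(\<Sum>j\<in>{2 ^ m..<2 ^ (m + 1)}. (cmod (\<alpha> j))^2)"
proof -
  have "I2 (\<lambda>\<theta>. trig \<alpha> (2^(m+1)) \<theta> - trig \<alpha> (2^m) \<theta>) = I2 (trig (\<lambda>n. if 2^m \<le> n then \<alpha> n else 0) (2^(m+1)))"
    by (subst trig_diff) auto
  also have "\<dots> = 2*pi*(\<Sum>n<2^(m+1). (cmod (if 2^m \<le> n then \<alpha> n else 0))^2)"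
    by (rule I2_trig)
  also have "(\<Sum>n<2^(m+1). (cmod (if 2^m \<le> n then \<alpha> n else 0))^2) = (\<Sum>j\<in>{2 ^ m..<2 ^ (m + 1)}. (cmod (\<alpha> j))^2)"
    by (rule sum.mono_neutral_cong_right) auto
  finally show ?thesis .
qed

lemma am_gm_aux:
  fixes y a :: real
  assumes "a > 0"
  shows "y \<le> (a + y^2 / a) / 2"
proof -
  have "0 \<le> (y - a)^2 / a" using assms by simp
  then show ?thesis using assms by (simp add: power2_eq_square field_simps)
qed

lemma ae_conv:
  fixes \<alpha> :: "nat \<Rightarrow> complex"
  assumes B: "\<forall>n::nat. 2 ^ n * (\<Sum>j\<in>{2 ^ n..<2 ^ (n + 1)}. (cmod (\<alpha> j))^2) \<le> (B::real)"
  shows "AE \<theta> in lborel. \<theta> \<in> {-pi..pi} \<longrightarrow> convergent (\<lambda>m. trig \<alpha> (2^m) \<theta>)"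
proof -
  define d where "d m \<theta> = trig \<alpha> (2^(m+1)) \<theta> - trig \<alpha> (2^m) \<theta>" for m \<theta>
  define b where "b m = (\<Sum>j\<in>{2 ^ m..<2 ^ (m + 1)}. (cmod (\<alpha> j))^2)" for m
  have b0: "0 \<le> b m" for m unfolding b_def by (intro sum_nonneg) auto
  have bB: "b m \<le> B / 2^m" for m using B[rule_format, of m] by (simp add: b_def field_simps)
  define W where "W m \<theta> = ennreal (indicator {-pi..pi} \<theta> * ((3/2)^m * (cmod (d m \<theta>))^2))" for m \<theta>
  have sd: "sqi (d m)" for m unfolding d_def by (intro sqi_diff sqi_trig)
  have md: "d m \<in> borel_measurable borel" for m using sd by (simp add: sqi_def)
  have mW: "W m \<in> borel_measurable lborel" for m
    unfolding W_def using md[of m] by measurable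
  have intW: "(\<integral>\<^sup>+ \<theta>. W m \<theta> \<partial>lborel) = ennreal ((3/2)^m * (2*pi*b m))" for m
  proof -
    have i: "integrable lborel (\<lambda>\<theta>. indicator {-pi..pi} \<theta> * (cmod (d m \<theta>))^2)"
      using sd[of m] by (simp add: sqi_def)
    have "(\<integral>\<^sup>+ \<theta>. W m \<theta> \<partial>lborel) = (\<integral>\<^sup>+ \<theta>. ennreal ((3/2)^m * (indicator {-pi..pi} \<theta> * (cmod (d m \<theta>))^2)) \<partial>lborel)"
      unfolding W_def by (intro nn_integral_cong) (simp add: mult_ac)
    also have "\<dots> = ennreal (integral\<^sup>L lborel (\<lambda>\<theta>. (3/2)^m * (indicator {-pi..pi} \<theta> * (cmod (d m \<theta>))^2)))"
      using i by (intro nn_integral_eq_integral) auto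
    also have "\<dots> = ennreal ((3/2)^m * I2 (d m))" by (simp add: I2_def)
    also have "I2 (d m) = 2*pi*b m" unfolding d_def b_def by (rule I2_block)
    finally show ?thesis .
  qed
  have cm: "(3/2)^m * (2*pi*b m) \<le> 2*pi*B * (3/4)^m" for m
  proof -
    have "(3/2)^m * (2*pi*b m) \<le> (3/2)^m * (2*pi*(B / 2^m))"
      using bB[of m] by (intro mult_left_mono) auto
    also have "\<dots> = 2*pi*B * (3/4)^m"
    proof -
      have "(2::real)^m * 2^m = 4^m" by (simp add: power_mult_distrib[symmetric])
      then show ?thesis by (simp add: power_divide field_simps)
    qed
    finally show ?thesis .
  qed
  have B0: "0 \<le> B" using B[rule_format, of 0] b0[of 0] by (simp add: b_def)
  have sumc: "summable (\<lambda>m. (3/2)^m * (2*pi*b m))"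
  proof (rule summable_comparison_test')
    show "summable (\<lambda>m. 2*pi*B * (3/4::real)^m)" by (intro summable_mult summable_geometric) auto
    show "norm ((3/2)^m * (2*pi*b m)) \<le> 2*pi*B * (3/4)^m" for m using cm[of m] b0[of m] by simp
  qed
  have "(\<integral>\<^sup>+ \<theta>. (\<Sum>m. W m \<theta>) \<partial>lborel) = (\<Sum>m. \<integral>\<^sup>+ \<theta>. W m \<theta> \<partial>lborel)"
    using mW by (intro nn_integral_suminf) auto
  also have "\<dots> = ennreal (\<Sum>m. (3/2)^m * (2*pi*b m))"
    unfolding intW using sumc b0 by (intro suminf_ennreal2) auto
  finally have fin: "(\<integral>\<^sup>+ \<theta>. (\<Sum>m. W m \<theta>) \<partial>lborel) \<noteq> \<infinity>" by simp
  have "AE \<theta> in lborel. (\<Sum>m. W m \<theta>) \<noteq> \<infinity>"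
    by (rule nn_integral_PInf_AE[OF _ fin]) (use mW in auto)
  then show ?thesis
  proof (rule AE_mp, intro AE_I2 impI)
    fix \<theta> assume fin\<theta>: "(\<Sum>m. W m \<theta>) \<noteq> \<infinity>" and th: "\<theta> \<in> {-pi..pi}"
    have "(\<Sum>m. ennreal ((3/2)^m * (cmod (d m \<theta>))^2)) = (\<Sum>m. W m \<theta>)"
      using th by (simp add: W_def)
    then have "summable (\<lambda>m. (3/2)^m * (cmod (d m \<theta>))^2)"
      using fin\<theta> by (intro summable_suminf_not_top) auto
    then have s2: "summable (\<lambda>m. ((2/3)^m + (3/2)^m * (cmod (d m \<theta>))^2) / 2)"
      by (intro summable_divide summable_add summable_geometric) auto
    have "summable (\<lambda>m. cmod (d m \<theta>))"
    proof (rule summable_comparison_test'[OF s2])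
      fix m
      have "cmod (d m \<theta>) \<le> ((2/3)^m + (cmod (d m \<theta>))^2 / (2/3)^m) / 2"
        by (rule am_gm_aux) simp
      also have "(cmod (d m \<theta>))^2 / (2/3)^m = (3/2)^m * (cmod (d m \<theta>))^2"
        by (simp add: power_divide field_simps)
      finally show "norm (cmod (d m \<theta>)) \<le> ((2/3)^m + (3/2)^m * (cmod (d m \<theta>))^2) / 2" by simp
    qed
    then have "summable (\<lambda>m. d m \<theta>)" by (rule summable_norm_cancel)
    then have "(\<lambda>m. \<Sum>i<m. d i \<theta>) \<longlonglongrightarrow> (\<Sum>i. d i \<theta>)" by (rule summable_LIMSEQ)
    then have "(\<lambda>m. trig \<alpha> (2^0) \<theta> + (\<Sum>i<m. d i \<theta>)) \<longlonglongrightarrow> trig \<alpha> (2^0) \<theta> + (\<Sum>i. d i \<theta>)"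
      by (intro tendsto_intros)
    moreover have "trig \<alpha> (2^0) \<theta> + (\<Sum>i<m. d i \<theta>) = trig \<alpha> (2^m) \<theta>" for m
      unfolding d_def using sum_lessThan_telescope[of "\<lambda>i. trig \<alpha> (2^i) \<theta>" m] by simp
    ultimately show "convergent (\<lambda>m. trig \<alpha> (2^m) \<theta>)" unfolding convergent_def by auto
  qed
qed


lemma trig_meas: "trig c N \<in> borel_measurable borel"
  by (rule borel_measurable_continuous_onI[OF trig_cont])

lemma sum_tail_split:
  fixes a :: "nat \<Rightarrow> complex" and N K :: nat
  assumes "N \<le> K"
  shows "(\<Sum>n<K. (cmod (if N \<le> n then a n else 0))^2) = (\<Sum>n<K. (cmod (a n))^2) - (\<Sum>n<N. (cmod (a n))^2)"
proof -
  have "(\<Sum>n<K. (cmod (a n))^2) = (\<Sum>n<N. (cmod (a n))^2) + (\<Sum>n\<in>{N..<K}. (cmod (a n))^2)"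
    using sum.atLeastLessThan_concat[of 0 N K "\<lambda>n. (cmod (a n))^2"] assms by (simp add: atLeast0LessThan)
  moreover have "(\<Sum>n<K. (cmod (if N \<le> n then a n else 0))^2) = (\<Sum>n\<in>{N..<K}. (cmod (a n))^2)"
    by (rule sum.mono_neutral_cong_right) auto
  ultimately show ?thesis by simp
qed

lemma iii_imp_ii:
  fixes \<alpha> :: "nat \<Rightarrow> complex"
  assumes ell: "ell2 \<alpha>"
    and B: "\<forall>n::nat. 2 ^ n * (\<Sum>j\<in>{2 ^ n..<2 ^ (n + 1)}. (cmod (\<alpha> j))^2) \<le> (B::real)"
  shows "\<exists>g. boundary_function \<alpha> g \<and> mean_lipschitz_half g"
proof -
  define G where "G \<theta> = lim (\<lambda>m. trig \<alpha> (2^m) \<theta>)" for \<theta>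
  have mG: "G \<in> borel_measurable borel"
    unfolding G_def by (rule borel_measurable_lim_metric[of "\<lambda>m. trig \<alpha> (2^m)"]) (rule trig_meas)
  have aeG: "AE \<theta> in lborel. \<theta> \<in> {-pi..pi} \<longrightarrow> (\<lambda>m. trig \<alpha> (2^m) \<theta>) \<longlonglongrightarrow> G \<theta>"
    using ae_conv[OF B] by eventually_elim (auto simp: G_def convergent_LIMSEQ_iff)
  have sa: "summable (\<lambda>n. (cmod (\<alpha> n))^2)" using ell by (simp add: ell2_def)
  define T where "T N = ell2_norm_sq \<alpha> - (\<Sum>n<N. (cmod (\<alpha> n))^2)" for N
  have Tge: "(\<Sum>n<K. (cmod (\<alpha> n))^2) - (\<Sum>n<N. (cmod (\<alpha> n))^2) \<le> T N" for K N
    using sum_le_suminf[OF sa, of "{..<K}"] by (simp add: T_def ell2_norm_sq_def)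
  have T0: "0 \<le> T N" for N using Tge[of N N] by simp
  have Tlim: "T \<longlonglongrightarrow> 0"
  proof -
    have "(\<lambda>N. ell2_norm_sq \<alpha> - (\<Sum>n<N. (cmod (\<alpha> n))^2)) \<longlonglongrightarrow> ell2_norm_sq \<alpha> - ell2_norm_sq \<alpha>"
      unfolding ell2_norm_sq_def by (intro tendsto_intros summable_LIMSEQ sa)
    then show ?thesis by (simp add: T_def[abs_def])
  qed
  define u where "u N \<theta> = trig \<alpha> N \<theta> - G \<theta>" for N \<theta>
  have mu: "u N \<in> borel_measurable borel" for N
    unfolding u_def using trig_meas[of \<alpha> N] mG by measurable
  have nn: "(\<integral>\<^sup>+ \<theta>. ennreal (indicator {-pi..pi} \<theta> * (cmod (u N \<theta>))^2) \<partial>lborel) \<le> ennreal (2*pi*T N)" for N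
  proof -
    define f where "f m \<theta> = ennreal (indicator {-pi..pi} \<theta> * (cmod (trig \<alpha> N \<theta> - trig \<alpha> (2^m) \<theta>))^2)" for m \<theta>
    have mf: "f m \<in> borel_measurable lborel" for m
      unfolding f_def using trig_meas[of \<alpha> N] trig_meas[of \<alpha> "2^m"] by measurable
    have ae: "AE \<theta> in lborel. ennreal (indicator {-pi..pi} \<theta> * (cmod (u N \<theta>))^2) = liminf (\<lambda>m. f m \<theta>)"
      using aeG
    proof eventually_elim
      case (elim \<theta>)
      show ?case
      proof (cases "\<theta> \<in> {-pi..pi}")
        case True
        then have "(\<lambda>m. trig \<alpha> (2^m) \<theta>) \<longlonglongrightarrow> G \<theta>" using elim by simp
        then have "(\<lambda>m. f m \<theta>) \<longlonglongrightarrow> ennreal (indicator {-pi..pi} \<theta> * (cmod (u N \<theta>))^2)"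
          unfolding f_def u_def by (intro tendsto_ennrealI tendsto_intros)
        then show ?thesis by (simp add: lim_imp_Liminf)
      next
        case False
        then show ?thesis by (simp add: f_def Liminf_const)
      qed
    qed
    have "(\<integral>\<^sup>+ \<theta>. ennreal (indicator {-pi..pi} \<theta> * (cmod (u N \<theta>))^2) \<partial>lborel) = (\<integral>\<^sup>+ \<theta>. liminf (\<lambda>m. f m \<theta>) \<partial>lborel)"
      by (rule nn_integral_cong_AE[OF ae])
    also have "\<dots> \<le> liminf (\<lambda>m. \<integral>\<^sup>+ \<theta>. f m \<theta> \<partial>lborel)"
      by (rule nn_integral_liminf) (use mf in auto)
    also have "\<dots> \<le> liminf (\<lambda>m. ennreal (2*pi*T N))"
    proof (rule Liminf_mono)
      show "\<forall>\<^sub>F m in sequentially. (\<integral>\<^sup>+ \<theta>. f m \<theta> \<partial>lborel) \<le> ennreal (2*pi*T N)"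
      proof (rule eventually_sequentiallyI[of N])
        fix m assume "N \<le> m"
        then have NK: "N \<le> 2^m" using less_exp[of m] by linarith
        have s: "sqi (\<lambda>\<theta>. trig \<alpha> N \<theta> - trig \<alpha> (2^m) \<theta>)" by (intro sqi_diff sqi_trig)
        then have i: "integrable lborel (\<lambda>\<theta>. indicator {-pi..pi} \<theta> * (cmod (trig \<alpha> N \<theta> - trig \<alpha> (2^m) \<theta>))^2)"
          by (simp add: sqi_def)
        have "(\<integral>\<^sup>+ \<theta>. f m \<theta> \<partial>lborel) = ennreal (I2 (\<lambda>\<theta>. trig \<alpha> N \<theta> - trig \<alpha> (2^m) \<theta>))"
          unfolding f_def I2_def by (rule nn_integral_eq_integral[OF i]) auto
        also have "I2 (\<lambda>\<theta>. trig \<alpha> N \<theta> - trig \<alpha> (2^m) \<theta>) = I2 (\<lambda>\<theta>. trig \<alpha> (2^m) \<theta> - trig \<alpha> N \<theta>)"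
          by (rule I2_commute)
        also have "\<dots> = I2 (trig (\<lambda>n. if N \<le> n then \<alpha> n else 0) (2^m))"
          using NK by (simp add: trig_diff)
        also have "\<dots> = 2*pi*((\<Sum>n<2^m. (cmod (\<alpha> n))^2) - (\<Sum>n<N. (cmod (\<alpha> n))^2))"
          by (simp add: I2_trig sum_tail_split[OF NK])
        also have "ennreal \<dots> \<le> ennreal (2*pi*T N)"
          using Tge[of "2^m" N] by (intro ennreal_leI mult_left_mono) auto
        finally show "(\<integral>\<^sup>+ \<theta>. f m \<theta> \<partial>lborel) \<le> ennreal (2*pi*T N)" .
      qed
    qed
    also have "\<dots> = ennreal (2*pi*T N)" by (simp add: Liminf_const)
    finally show ?thesis .
  qed
  have iu: "integrable lborel (\<lambda>\<theta>. indicator {-pi..pi} \<theta> * (cmod (u N \<theta>))^2)" for N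
  proof (rule integrableI_bounded)
    show "(\<lambda>\<theta>. indicator {-pi..pi} \<theta> * (cmod (u N \<theta>))^2) \<in> borel_measurable lborel"
      using mu[of N] by measurable
    have "(\<integral>\<^sup>+ \<theta>. ennreal (norm (indicator {-pi..pi} \<theta> * (cmod (u N \<theta>))^2)) \<partial>lborel)
        = (\<integral>\<^sup>+ \<theta>. ennreal (indicator {-pi..pi} \<theta> * (cmod (u N \<theta>))^2) \<partial>lborel)"
      by (intro nn_integral_cong) (simp add: indicator_def)
    also have "\<dots> \<le> ennreal (2*pi*T N)" by (rule nn)
    also have "\<dots> < \<infinity>" by simp
    finally show "(\<integral>\<^sup>+ \<theta>. ennreal (norm (indicator {-pi..pi} \<theta> * (cmod (u N \<theta>))^2)) \<partial>lborel) < \<infinity>" .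
  qed
  have su: "sqi (u N)" for N using mu iu by (simp add: sqi_def)
  have I2u: "I2 (u N) \<le> 2*pi*T N" for N
  proof -
    have "ennreal (I2 (u N)) = (\<integral>\<^sup>+ \<theta>. ennreal (indicator {-pi..pi} \<theta> * (cmod (u N \<theta>))^2) \<partial>lborel)"
      unfolding I2_def by (rule nn_integral_eq_integral[OF iu, symmetric]) auto
    also have "\<dots> \<le> ennreal (2*pi*T N)" by (rule nn)
    finally show ?thesis using T0[of N] by (simp add: ennreal_le_iff)
  qed
  have sG: "sqi G"
  proof -
    have "sqi (\<lambda>\<theta>. trig \<alpha> 0 \<theta> - u 0 \<theta>)" by (intro sqi_diff sqi_trig su)
    then show ?thesis by (simp add: u_def)
  qed
  have perG: "G (x + 2*pi) = G x" for x by (simp add: G_def trig_periodic)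
  have L2G: "L2_circle G" using sG perG by (simp add: L2_circle_sqi)
  have dN: "L2_dist_circle (trig \<alpha> N) G \<le> sqrt (T N)" for N
  proof -
    have "L2_dist_circle (trig \<alpha> N) G = sqrt (I2 (u N) / (2*pi))" by (simp add: dist_I2 u_def[abs_def])
    also have "\<dots> \<le> sqrt (T N)" using I2u[of N] by (intro real_sqrt_le_mono) (simp add: field_simps)
    finally show ?thesis .
  qed
  have d0: "0 \<le> L2_dist_circle (trig \<alpha> N) G" for N by (simp add: dist_I2 I2_nonneg)
  have conv: "(\<lambda>N. L2_dist_circle (trig \<alpha> N) G) \<longlonglongrightarrow> 0"
  proof (rule tendsto_sandwich[of "\<lambda>_. 0" _ _ "\<lambda>N. sqrt (T N)"])
    show "\<forall>\<^sub>F N in sequentially. 0 \<le> L2_dist_circle (trig \<alpha> N) G" using d0 by simp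
    show "\<forall>\<^sub>F N in sequentially. L2_dist_circle (trig \<alpha> N) G \<le> sqrt (T N)" using dN by simp
    show "(\<lambda>_. 0) \<longlonglongrightarrow> (0::real)" by simp
    show "(\<lambda>N. sqrt (T N)) \<longlonglongrightarrow> 0" using tendsto_real_sqrt[OF Tlim] by simp
  qed
  have bf: "boundary_function \<alpha> G" unfolding boundary_function_def trig_eq using L2G conv by simp
  have ml: "L2_dist_circle (\<lambda>\<theta>. G (\<theta> - t)) G \<le> sqrt (16 * B) * sqrt \<bar>t\<bar>" if t: "t \<in> {-pi..pi}" for t
  proof -
    have step: "L2_dist_circle (\<lambda>\<theta>. G (\<theta> - t)) G \<le> 2 * L2_dist_circle (trig \<alpha> N) G + sqrt (16 * B * \<bar>t\<bar>)" for N
    proof -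
      have "sqrt (2*pi) * L2_dist_circle (\<lambda>\<theta>. G (\<theta> - t)) G = sqrt (I2 (\<lambda>\<theta>. G (\<theta> - t) - G \<theta>))"
        by (rule sqrt_I2_dist[symmetric])
      also have "\<dots> \<le> 2 * sqrt (I2 (\<lambda>\<theta>. trig \<alpha> N \<theta> - G \<theta>)) + sqrt (I2 (\<lambda>\<theta>. trig \<alpha> N (\<theta> - t) - trig \<alpha> N \<theta>))"
        by (rule shift_est(2)[OF sG perG t])
      also have "sqrt (I2 (\<lambda>\<theta>. trig \<alpha> N (\<theta> - t) - trig \<alpha> N \<theta>)) \<le> sqrt (2*pi) * sqrt (16 * B * \<bar>t\<bar>)"
        unfolding shift_dist_sq real_sqrt_mult[symmetric]
        using E_est[OF B, where N=N and t=t] by (intro real_sqrt_le_mono mult_left_mono) auto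
      also have "sqrt (I2 (\<lambda>\<theta>. trig \<alpha> N \<theta> - G \<theta>)) = sqrt (2*pi) * L2_dist_circle (trig \<alpha> N) G"
        by (rule sqrt_I2_dist)
      finally have "sqrt (2*pi) * L2_dist_circle (\<lambda>\<theta>. G (\<theta> - t)) G \<le> sqrt (2*pi) * (2 * L2_dist_circle (trig \<alpha> N) G + sqrt (16 * B * \<bar>t\<bar>))"
        by (simp add: algebra_simps)
      then show ?thesis by simp
    qed
    have lim: "(\<lambda>N. 2 * L2_dist_circle (trig \<alpha> N) G + sqrt (16 * B * \<bar>t\<bar>)) \<longlonglongrightarrow> 2 * 0 + sqrt (16 * B * \<bar>t\<bar>)"
      by (intro tendsto_intros conv)
    have "L2_dist_circle (\<lambda>\<theta>. G (\<theta> - t)) G \<le> sqrt (16 * B * \<bar>t\<bar>)"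
      by (rule LIMSEQ_le_const[OF lim[simplified]]) (use step in auto)
    then show ?thesis by (simp add: real_sqrt_mult)
  qed
  have "mean_lipschitz_half G" unfolding mean_lipschitz_half_def using L2G ml by blast
  with bf show ?thesis by blast
qed

theorem theorem1p1:
  fixes \<alpha> :: "nat \<Rightarrow> complex"
  assumes "ell2 \<alpha>"
  shows "(rhaly_bounded \<alpha> \<longleftrightarrow> (\<exists>g. boundary_function \<alpha> g \<and> mean_lipschitz_half g))
       \<and> ((\<exists>g. boundary_function \<alpha> g \<and> mean_lipschitz_half g) \<longleftrightarrow>
          (\<exists>B. \<forall>n::nat. 2 ^ n * (\<Sum>j\<in>{2 ^ n..<2 ^ (n + 1)}. (cmod (\<alpha> j))^2) \<le> (B::real)))"
proof -
  have 1: "rhaly_bounded \<alpha> \<longleftrightarrow> (\<exists>B. \<forall>n::nat. 2 ^ n * (\<Sum>j\<in>{2 ^ n..<2 ^ (n + 1)}. (cmod (\<alpha> j))^2) \<le> (B::real))"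
    using i_imp_iii iii_imp_i by blast
  have 2: "(\<exists>g. boundary_function \<alpha> g \<and> mean_lipschitz_half g) \<longleftrightarrow>
          (\<exists>B. \<forall>n::nat. 2 ^ n * (\<Sum>j\<in>{2 ^ n..<2 ^ (n + 1)}. (cmod (\<alpha> j))^2) \<le> (B::real))"
    using ii_imp_iii iii_imp_ii[OF assms] by blast
  from 1 2 show ?thesis by blast
qed

end
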